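(* For all complex $k_1,k_2,\dots$ and $k'_1,\dots$, and indices such that all roots involved have indices in $\{1,\dots,n-1\}$ (with $l\ge1$, $m\ge0$ where applicable): (1) $f_{i\cdots i+l-1}[k_1,\dots,k_{l-1}]*f_{i+l\cdots i+l+m}[k_{l+1},\dots,k_{l+m}]=f_{i\cdots i+l+m}[k_1,\dots,k_{l-1},-1,k_{l+1},\dots,k_{l+m}]$; (2) $f_{i+l\cdots i+l+m}[k_{l+1},\dots,k_{l+m}]*f_{i\cdots i+l-1}[k_1,\dots,k_{l-1}]=f_{i\cdots i+l+m}[k_1,\dots,k_{l-1},0,k_{l+1},\dots,k_{l+m}]$; (3) for $m\ge1$: $f_i*f_{i\cdots i+m}[k_1,k_2,\dots,k_m]=f_{i\cdots i+m}[k_1-1,k_2,\dots,k_m]*f_i$; (4) for $m\ge1$: $f_{i+m}*f_{i\cdots i+m}[k_1,\dots,k_{m-1},k_m-1]=f_{i\cdots i+m}[k_1,\dots,k_{m-1},k_m]*f_{i+m}$; (5) if $i+m+1<j$: $f_{i\cdots i+m}[k_1,\dots,k_m]*f_{j\cdots j+l}[k'_1,\dots,k'_l]=f_{j\cdots j+l}[k'_1,\dots,k'_l]*f_{i\cdots i+m}[k_1,\dots,k_m]$.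
   Context: Fix an integer $n\ge2$, an integer $r>0$, a real $0<x<1$ and a complex parameter $\delta$. Let $[u]=x^{u^2/r-u}\Theta_{x^{2r}}(x^{2u})$, $\Theta_q(z)=(z;q)_\infty(q/z;q)_\infty(q;q)_\infty$. A function of type $(a_1,\dots,a_{n-1})$ ($a_j\in\mathbb Z_{\ge0}$) is a function of variables $u^{(b)}_j$ ($1\le j\le n-1$, $1\le b\le a_j$) and $\kappa_1,\dots,\kappa_{n-1}$, symmetric in $(u^{(1)}_j,\dots,u^{(a_j)}_j)$ for each $j$. For $f$ of type $(a_j)$ and $g$ of type $(b_j)$, $f*g$ is of type $(a_j+b_j)$: $(f*g)=S\Big(f(u;\kappa_1+(b_0-2b_1+b_2)\delta,\dots,\kappa_{n-1}+(b_{n-2}-2b_{n-1}+b_n)\delta)\,g(v;\kappa)\prod_{j,a\le a_j,b\le b_j}\frac{[u^{(a)}_j-v^{(b)}_j-\delta]}{[u^{(a)}_j-v^{(b)}_j]}\prod_{1\le j\le n-2,a\le a_j,b\le b_{j+1}}\frac{[u^{(a)}_j-v^{(b)}_{j+1}+\frac\delta2]}{[u^{(a)}_j-v^{(b)}_{j+1}]}\prod_{2\le j\le n-1,a\le a_j,b\le b_{j-1}}\frac{[u^{(a)}_j-v^{(b)}_{j-1}+\frac\delta2]}{[u^{(a)}_j-v^{(b)}_{j-1}]}\Big)$, $b_0=b_n=0$, $S$ = average over permutations of $(u^{(1)}_j,\dots,u^{(a_j)}_j,v^{(1)}_j,\dots,v^{(b_j)}_j)$ for each $j$. For $1\le i\le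 i+m\le n-1$ and $k_1,\dots,k_m\in\mathbb C$ (with $k_0=-1$, $k_{m+1}=0$), $f_{i\cdots i+m}[k_1,\dots,k_m]$ is the function of type $(a_j)$, $a_j=1$ for $i\le j\le i+m$ and $0$ otherwise, equal to $\prod_{j=1}^m\frac{[u_{i+j-1}-u_{i+j}-(k_j+\frac12)\delta]}{[u_{i+j-1}-u_{i+j}]}\prod_{j=0}^m[u_{i+j}-(k_j-k_{j+1}+\frac12)\delta-\kappa_{i+j}]$; for $m=0$ it is $f_i=[u_i+\frac\delta2-\kappa_i]$ (with no bracket arguments). *)

theory Defs
  imports "HOL-Analysis.Analysis" "HOL-Combinatorics.Permutations"
begin

definition qpoch :: "complex \<Rightarrow> complex \<Rightarrow> complex" where
  "qpoch z q = prodinf (\<lambda>k::nat. 1 - z * q ^ k)"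

definition theta :: "complex \<Rightarrow> complex \<Rightarrow> complex" where
  "theta q z = qpoch z q * qpoch (q / z) q * qpoch q q"

definition brk :: "real \<Rightarrow> nat \<Rightarrow> complex \<Rightarrow> complex" where
  "brk x r u = exp ((u ^ 2 / of_nat r - u) * of_real (ln x))
      * theta (of_real (x ^ (2 * r))) (exp (2 * u * of_real (ln x)))"

text \<open>A function of type (a_j): a pair of the type a (a_j for 1 <= j <= n-1, 0 elsewhere)
  and the function itself, taking variables u j b (1 <= b <= a j) and kappa j.\<close>
type_synonym tfun = "(nat \<Rightarrow> nat) \<times> ((nat \<Rightarrow> nat \<Rightarrow> complex) \<Rightarrow> (nat \<Rightarrow> complex) \<Rightarrow> complex)"

definition perms_tuple :: "nat \<Rightarrow> (nat \<Rightarrow> nat) \<Rightarrow> (nat \<Rightarrow> nat \<Rightarrow> nat) set" where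
  "perms_tuple n c = PiE {1..n-1} (\<lambda>j. {p. p permutes {1..c j}})"

definition star_integrand ::
  "nat \<Rightarrow> real \<Rightarrow> nat \<Rightarrow> complex \<Rightarrow> tfun \<Rightarrow> tfun \<Rightarrow>
     (nat \<Rightarrow> nat \<Rightarrow> complex) \<Rightarrow> (nat \<Rightarrow> complex) \<Rightarrow> complex" where
  "star_integrand n x r \<delta> F G w \<kappa> =
    (let a = fst F; b = fst G;
         b' = (\<lambda>j. if 1 \<le> j \<and> j \<le> n - 1 then b j else 0);
         \<kappa>' = (\<lambda>j. \<kappa> j + (of_nat (b' (j - 1)) - 2 * of_nat (b' j) + of_nat (b' (j + 1))) * \<delta>);
         u = (\<lambda>j s. w j s);
         v = (\<lambda>j t. w j (a j + t))
     in snd F u \<kappa>' * snd G v \<kappa>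
        * (\<Prod>j\<in>{1..n-1}. \<Prod>s\<in>{1..a j}. \<Prod>t\<in>{1..b j}.
             brk x r (u j s - v j t - \<delta>) / brk x r (u j s - v j t))
        * (\<Prod>j\<in>{1..n-2}. \<Prod>s\<in>{1..a j}. \<Prod>t\<in>{1..b (j+1)}.
             brk x r (u j s - v (j+1) t + \<delta>/2) / brk x r (u j s - v (j+1) t))
        * (\<Prod>j\<in>{2..n-1}. \<Prod>s\<in>{1..a j}. \<Prod>t\<in>{1..b (j-1)}.
             brk x r (u j s - v (j-1) t + \<delta>/2) / brk x r (u j s - v (j-1) t)))"

definition star :: "nat \<Rightarrow> real \<Rightarrow> nat \<Rightarrow> complex \<Rightarrow> tfun \<Rightarrow> tfun \<Rightarrow> tfun" where
  "star n x r \<delta> F G =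
    (let c = (\<lambda>j. fst F j + fst G j)
     in (c, \<lambda>w \<kappa>. (\<Sum>\<sigma>\<in>perms_tuple n c.
            star_integrand n x r \<delta> F G
              (\<lambda>j t. if 1 \<le> j \<and> j \<le> n - 1 then w j (\<sigma> j t) else w j t) \<kappa>)
          / of_nat (card (perms_tuple n c))))"

text \<open>f_{i...i+m}[k_1,...,k_m] with m = length ks, k_0 = -1, k_{m+1} = 0.
  For ks = [] this is f_i = [u_i + delta/2 - kappa_i].\<close>
definition fchain :: "real \<Rightarrow> nat \<Rightarrow> complex \<Rightarrow> nat \<Rightarrow> complex list \<Rightarrow> tfun" where
  "fchain x r \<delta> i ks =
    (let m = length ks;
         kk = (\<lambda>j. if j = 0 then -1 else if j \<le> m then ks ! (j - 1) else 0)
     in (\<lambda>j. if i \<le> j \<and> j \<le> i + m then 1 else 0,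
         \<lambda>u \<kappa>. (\<Prod>j\<in>{1..m}. brk x r (u (i+j-1) 1 - u (i+j) 1 - (kk j + 1/2) * \<delta>)
                              / brk x r (u (i+j-1) 1 - u (i+j) 1))
              * (\<Prod>j\<in>{0..m}. brk x r (u (i+j) 1 - (kk j - kk (j+1) + 1/2) * \<delta> - \<kappa> (i+j)))))"

definition generic :: "nat \<Rightarrow> real \<Rightarrow> nat \<Rightarrow> (nat \<Rightarrow> nat) \<Rightarrow> (nat \<Rightarrow> nat \<Rightarrow> complex) \<Rightarrow> bool" where
  "generic n x r c w \<longleftrightarrow>
    (\<forall>j j' s t. j \<in> {1..n-1} \<longrightarrow> j' \<in> {1..n-1} \<longrightarrow> (j' = j \<or> j' = j + 1 \<or> j = j' + 1)
       \<longrightarrow> s \<in> {1..c j} \<longrightarrow> t \<in> {1..c j'} \<longrightarrow> (j, s) \<noteq> (j', t)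
       \<longrightarrow> brk x r (w j s - w j' t) \<noteq> 0)"

text \<open>Equality of functions of a given type, as meromorphic functions:
  same type and equal values at all generic points, for all kappa.\<close>
definition teq :: "nat \<Rightarrow> real \<Rightarrow> nat \<Rightarrow> tfun \<Rightarrow> tfun \<Rightarrow> bool" where
  "teq n x r F G \<longleftrightarrow> fst F = fst G \<and>
     (\<forall>w \<kappa>. generic n x r (fst F) w \<longrightarrow> snd F w \<kappa> = snd G w \<kappa>)"

end

theory Submission
  imports Defs "HOL-Complex_Analysis.Complex_Analysis"
begin

lemma qpoch_conv:
  fixes q z :: complex assumes "norm q < 1"
  shows "convergent_prod (\<lambda>k. 1 - z * q ^ k)"
proof -
  have "summable (\<lambda>k. norm z * norm q ^ k)"
    using assms by (intro summable_mult summable_geometric) auto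
  hence "summable (\<lambda>k. norm ((1 - z * q ^ k) - 1))"
    by (simp add: norm_mult norm_power)
  thus ?thesis
    by (intro abs_convergent_prod_imp_convergent_prod summable_imp_abs_convergent_prod)
qed

lemma qpoch_split:
  fixes q z :: complex assumes "norm q < 1"
  shows "qpoch z q = (1 - z) * qpoch (z * q) q"
proof (cases "z = 1")
  case True
  have "(\<lambda>k. 1 - z * q ^ k) has_prod qpoch z q"
    unfolding qpoch_def using qpoch_conv[OF assms] convergent_prod_has_prod by blast
  hence "qpoch z q = 0" by (rule has_prod_zeroI[where n=0]) (simp add: True)
  thus ?thesis using True by simp
next
  case False
  have "(\<Prod>n. (\<lambda>k. 1 - z * q ^ k) (Suc n)) = qpoch z q / (1 - z)"
    unfolding qpoch_def using prodinf_split_head[OF qpoch_conv[OF assms, of z]] False by simp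
  moreover have "(\<lambda>n. (\<lambda>k. 1 - z * q ^ k) (Suc n)) = (\<lambda>k. 1 - z * q * q ^ k)"
    by (auto simp: mult_ac)
  ultimately have "qpoch (z*q) q = qpoch z q / (1 - z)" unfolding qpoch_def by simp
  thus ?thesis using False by (simp add: field_simps)
qed

lemma qpoch_zero:
  fixes q z :: complex assumes "norm q < 1" "qpoch z q = 0"
  shows "\<exists>k. z * q ^ k = 1"
  using prodinf_nonzero[OF qpoch_conv[OF assms(1), of z]] assms(2) unfolding qpoch_def
  by (metis right_minus_eq)

lemma qpoch_q_nz:
  fixes q :: complex assumes "norm q < 1"
  shows "qpoch q q \<noteq> 0"
proof
  assume "qpoch q q = 0"
  then obtain k where "q * q ^ k = 1" using qpoch_zero assms by blast
  hence "norm q ^ Suc k = 1" by (metis norm_one norm_power power_Suc)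
  moreover have "norm q ^ Suc k < 1"
  proof -
    have "norm q ^ k \<le> 1" using assms by (simp add: power_le_one)
    hence "norm q * norm q ^ k \<le> norm q" by (rule mult_left_le) simp
    thus ?thesis using assms by simp
  qed
  ultimately show False by simp
qed

lemma qpoch_holo:
  fixes q :: complex assumes "norm q < 1"
  shows "(\<lambda>z. qpoch z q) holomorphic_on UNIV"
proof (rule holomorphic_uniform_sequence[where f = "\<lambda>N z. \<Prod>k<N. 1 - z * q ^ k"])
  fix N show "(\<lambda>z. \<Prod>k<N. 1 - z * q ^ k) holomorphic_on UNIV"
    by (intro holomorphic_intros)
next
  fix x :: complex
  define R where "R = norm x + 1"
  have R: "R > 0" unfolding R_def by (smt (verit) norm_ge_zero)
  have uc: "uniformly_convergent_on (cball 0 R) (\<lambda>N z. \<Prod>n<N. 1 + (- (z * q ^ n)))"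
  proof (rule uniformly_convergent_on_prod)
    show "continuous_on (cball 0 R) (\<lambda>z. - (z * q ^ n))" for n by (intro continuous_intros)
    show "compact (cball (0::complex) R)" by simp
    have "uniform_limit (cball 0 R) (\<lambda>N z. \<Sum>n<N. norm (- (z * q ^ n))) (\<lambda>z. suminf (\<lambda>n. norm (- (z * q ^ n)))) sequentially"
    proof (rule Weierstrass_m_test[where M = "\<lambda>n. R * norm q ^ n"])
      fix n and z :: complex assume "z \<in> cball 0 R"
      thus "norm (norm (- (z * q ^ n))) \<le> R * norm q ^ n"
        by (simp add: norm_mult norm_power mult_right_mono)
    next
      show "summable (\<lambda>n. R * norm q ^ n)" using assms by (intro summable_mult summable_geometric) auto
    qed
    thus "uniformly_convergent_on (cball 0 R) (\<lambda>N z. \<Sum>n<N. norm (- (z * q ^ n)))"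
      unfolding uniformly_convergent_on_def by blast
  qed
  hence "uniform_limit (cball 0 R) (\<lambda>N z. \<Prod>n<N. 1 + (- (z * q ^ n))) (\<lambda>z. lim (\<lambda>N. \<Prod>n<N. 1 + (- (z * q ^ n)))) sequentially"
    using uniformly_convergent_uniform_limit_iff by blast
  moreover have "lim (\<lambda>N. \<Prod>n<N. 1 + (- (z * q ^ n))) = qpoch z q" for z
  proof -
    have "(\<lambda>n. \<Prod>i\<le>n. 1 - z * q ^ i) \<longlonglongrightarrow> qpoch z q"
      unfolding qpoch_def by (rule convergent_prod_LIMSEQ[OF qpoch_conv[OF assms]])
    hence "(\<lambda>n. \<Prod>i<Suc n. 1 - z * q ^ i) \<longlonglongrightarrow> qpoch z q"
      by (simp add: lessThan_Suc_atMost)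
    hence "(\<lambda>n. \<Prod>i<n. 1 - z * q ^ i) \<longlonglongrightarrow> qpoch z q"
      by (rule LIMSEQ_imp_Suc)
    thus ?thesis by (simp add: limI)
  qed
  ultimately have "uniform_limit (cball 0 R) (\<lambda>N z. \<Prod>k<N. 1 - z * q ^ k) (\<lambda>z. qpoch z q) sequentially"
    by simp
  moreover have "cball x 1 \<subseteq> cball 0 R" unfolding R_def
    by (auto simp: dist_norm) (metis add.commute add_le_cancel_left norm_minus_commute norm_triangle_sub order_trans)
  ultimately show "\<exists>d>0. cball x d \<subseteq> UNIV \<and> uniform_limit (cball x d) (\<lambda>N z. \<Prod>k<N. 1 - z * q ^ k) (\<lambda>z. qpoch z q) sequentially"
    by (intro exI[of _ 1]) (auto intro: uniform_limit_on_subset)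
qed simp

lemma theta_alt:
  fixes q :: complex assumes "norm q < 1"
  shows "theta q z = (1 - z) * (qpoch (z * q) q * qpoch (q / z) q * qpoch q q)"
  unfolding theta_def using qpoch_split[OF assms, of z] by simp

lemma theta_qshift:
  fixes q z :: complex assumes "norm q < 1" "q \<noteq> 0" "z \<noteq> 0"
  shows "theta q (q * z) = - (1 / z) * theta q z"
proof -
  have "theta q (q * z) = qpoch (q*z) q * qpoch (1/z) q * qpoch q q"
    unfolding theta_def using assms by simp
  also have "qpoch (1/z) q = (1 - 1/z) * qpoch (q/z) q"
    using qpoch_split[OF assms(1), of "1/z"] by simp
  finally show ?thesis using assms unfolding theta_alt[OF assms(1), of z]
    by (simp add: field_simps)
qed

lemma theta_inv:
  fixes q z :: complex assumes "norm q < 1" "q \<noteq> 0" "z \<noteq> 0"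
  shows "theta q (1 / z) = - (1 / z) * theta q z"
proof -
  have "theta q (1 / z) = qpoch (1/z) q * qpoch (q*z) q * qpoch q q"
    unfolding theta_def using assms by simp
  also have "qpoch (1/z) q = (1 - 1/z) * qpoch (q/z) q"
    using qpoch_split[OF assms(1), of "1/z"] by simp
  finally show ?thesis using assms unfolding theta_alt[OF assms(1), of z]
    by (simp add: field_simps)
qed

lemma theta_one: "norm q < 1 \<Longrightarrow> theta q 1 = 0"
  using theta_alt[of q 1] by simp

lemma theta_zero:
  fixes q z :: complex assumes "norm q < 1" "q \<noteq> 0" "z \<noteq> 0" "theta q z = 0"
  shows "\<exists>k::int. z = q powi k"
proof -
  have "qpoch z q = 0 \<or> qpoch (q/z) q = 0"
    using assms qpoch_q_nz[OF assms(1)] unfolding theta_def by auto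
  thus ?thesis
  proof
    assume "qpoch z q = 0"
    then obtain k where "z * q ^ k = 1" using qpoch_zero assms by blast
    hence "z = q powi (- int k)" using assms by (simp add: power_int_minus field_simps)
    thus ?thesis by blast
  next
    assume "qpoch (q/z) q = 0"
    then obtain k where "q / z * q ^ k = 1" using qpoch_zero assms by blast
    hence "z = q ^ Suc k" using assms by (simp add: field_simps)
    hence "z = q powi (int (Suc k))" by (simp only: power_int_of_nat)
    thus ?thesis by blast
  qed
qed

lemma qpoch_comp_holo:
  fixes q :: complex assumes "norm q < 1" "f holomorphic_on S"
  shows "(\<lambda>z. qpoch (f z) q) holomorphic_on S"
proof -
  have "((\<lambda>z. qpoch z q) \<circ> f) holomorphic_on S"
    by (rule holomorphic_on_compose[OF assms(2)]) (rule holomorphic_on_subset[OF qpoch_holo[OF assms(1)]], simp)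
  thus ?thesis by (simp add: o_def)
qed

lemma theta_comp_holo:
  fixes q :: complex assumes "norm q < 1" "f holomorphic_on S" "\<And>z. z \<in> S \<Longrightarrow> f z \<noteq> 0"
  shows "(\<lambda>z. theta q (f z)) holomorphic_on S"
  unfolding theta_def
  by (intro holomorphic_intros qpoch_comp_holo assms) (use assms(3) in auto)

lemma theta_holo:
  fixes q :: complex assumes "norm q < 1"
  shows "theta q holomorphic_on - {0}"
  using theta_comp_holo[OF assms, of "\<lambda>z. z" "-{0}"] by (simp add: holomorphic_on_ident)

lemma theta_deriv:
  fixes q :: complex assumes "norm q < 1" "z \<noteq> 0"
  shows "(theta q has_field_derivative deriv (theta q) z) (at z)"
proof -
  have "theta q field_differentiable at z"
    using theta_holo[OF assms(1)] assms(2) holomorphic_on_imp_differentiable_at by auto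
  thus ?thesis using DERIV_deriv_iff_field_differentiable by blast
qed

lemma theta_deriv_one:
  fixes q :: complex assumes "norm q < 1" "q \<noteq> 0"
  shows "deriv (theta q) 1 \<noteq> 0"
proof -
  define R where "R = (\<lambda>z. qpoch (z * q) q * qpoch (q / z) q * qpoch q q)"
  have eq: "theta q = (\<lambda>z. (1 - z) * R z)"
    using theta_alt[OF assms(1)] unfolding R_def by auto
  have "R holomorphic_on -{0}" unfolding R_def
    by (intro holomorphic_intros qpoch_comp_holo assms) auto
  hence "R field_differentiable at 1"
    by (rule holomorphic_on_imp_differentiable_at) auto
  then obtain R' where R': "(R has_field_derivative R') (at 1)"
    using field_differentiable_def by blast
  have "((\<lambda>z. (1 - z) * R z) has_field_derivative (-1) * R 1 + (1 - 1) * R') (at 1)"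
    by (rule derivative_eq_intros R' | simp)+
  hence "deriv (theta q) 1 = - R 1" unfolding eq by (simp add: DERIV_imp_deriv)
  moreover have "R 1 = qpoch q q * qpoch q q * qpoch q q" unfolding R_def by simp
  ultimately show ?thesis using qpoch_q_nz[OF assms(1)] by simp
qed

lemma theta_deriv_qshift:
  fixes q z :: complex assumes "norm q < 1" "q \<noteq> 0" "z \<noteq> 0"
  shows "q * deriv (theta q) (q * z) = (1 / z^2) * theta q z - (1 / z) * deriv (theta q) z"
proof -
  have d1: "((\<lambda>w. theta q (q * w)) has_field_derivative deriv (theta q) (q * z) * q) (at z)"
  proof -
    have h: "(theta q has_field_derivative deriv (theta q) (q * z)) (at ((\<lambda>w. q * w) z))"
      using theta_deriv[OF assms(1), of "q*z"] assms by simp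
    have d0: "((\<lambda>w. q * w) has_field_derivative q) (at z)"
      by (auto intro!: derivative_eq_intros)
    show ?thesis using DERIV_chain2[OF h d0] by simp
  qed
  have d2: "((\<lambda>w. - (1 / w) * theta q w) has_field_derivative (1 / z^2) * theta q z - (1 / z) * deriv (theta q) z) (at z)"
    using theta_deriv[OF assms(1,3)] assms(3)
    by (auto intro!: derivative_eq_intros simp: power2_eq_square field_simps)
  have d3: "((\<lambda>w. theta q (q * w)) has_field_derivative (1 / z^2) * theta q z - (1 / z) * deriv (theta q) z) (at z)"
    by (rule has_field_derivative_transform_within_open[OF d2, of "-{0}"])
       (use assms theta_qshift[OF assms(1,2)] in auto)
  show ?thesis using DERIV_unique[OF d1 d3] by (simp add: mult.commute)
qed

lemma qshift_pred:
  fixes q :: complex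
  assumes "q \<noteq> 0" "\<And>X. X \<noteq> 0 \<Longrightarrow> P (q * X) \<longleftrightarrow> P X" "X \<noteq> 0"
  shows "P (q powi k * X) \<longleftrightarrow> P X"
proof -
  have nat: "P (q ^ n * Y) \<longleftrightarrow> P Y" if "Y \<noteq> 0" for n Y
  proof (induction n)
    case (Suc n)
    have "P (q ^ Suc n * Y) = P (q * (q ^ n * Y))" by (simp add: mult_ac)
    also have "\<dots> = P (q ^ n * Y)" using assms that by (intro assms(2)) auto
    finally show ?case using Suc by simp
  qed simp
  show ?thesis
  proof (cases "k \<ge> 0")
    case True
    define n where "n = nat k"
    have "k = int n" unfolding n_def using True by simp
    thus ?thesis using nat[OF assms(3)] by (simp add: power_int_of_nat)
  next
    case False
    define n where "n = nat (-k)"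
    have k: "k = - int n" unfolding n_def using False by simp
    define Y where "Y = q powi k * X"
    have Y: "Y \<noteq> 0" unfolding Y_def using assms by simp
    have X: "X = q ^ n * Y" unfolding Y_def k using assms by (simp add: power_int_minus field_simps)
    have "P (q ^ n * Y) \<longleftrightarrow> P Y" by (rule nat[OF Y])
    hence "P X \<longleftrightarrow> P Y" using X by simp
    thus ?thesis unfolding Y_def by blast
  qed
qed

lemma theta_zero_powi:
  fixes q :: complex assumes "norm q < 1" "q \<noteq> 0"
  shows "theta q (q powi k) = 0"
proof -
  have "theta q (q powi k * 1) = 0 \<longleftrightarrow> theta q 1 = 0"
    by (rule qshift_pred[OF assms(2)]) (use theta_qshift[OF assms] in auto)
  thus ?thesis using theta_one[OF assms(1)] by simp
qed

lemma theta_simple_zero: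
  fixes q z :: complex assumes "norm q < 1" "q \<noteq> 0" "z \<noteq> 0" "theta q z = 0"
  shows "deriv (theta q) z \<noteq> 0"
proof -
  obtain k where k: "z = q powi k" using theta_zero[OF assms] by blast
  let ?P = "\<lambda>z. theta q z = 0 \<and> deriv (theta q) z \<noteq> 0"
  have "?P (q powi k * 1) \<longleftrightarrow> ?P 1"
  proof (rule qshift_pred[OF assms(2)])
    fix X :: complex assume X: "X \<noteq> 0"
    show "?P (q * X) \<longleftrightarrow> ?P X"
      using theta_qshift[OF assms(1,2) X] theta_deriv_qshift[OF assms(1,2) X] X assms(2)
      by auto
  qed simp
  thus ?thesis using theta_one[OF assms(1)] theta_deriv_one[OF assms(1,2)] k by simp
qed

definition I3 :: "complex \<Rightarrow> complex \<Rightarrow> complex \<Rightarrow> complex \<Rightarrow> complex \<Rightarrow> complex" where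
  "I3 q Y U V X = Y * theta q (X*Y) * theta q (X/Y) * theta q (U*V) * theta q (U/V)
     - U * theta q (X*U) * theta q (X/U) * theta q (Y*V) * theta q (Y/V)
     + U * theta q (X*V) * theta q (X/V) * theta q (Y*U) * theta q (Y/U)"

definition D3 :: "complex \<Rightarrow> complex \<Rightarrow> complex \<Rightarrow> complex" where
  "D3 q Y X = theta q (X*Y) * theta q (X/Y)"

lemma pair_qshift:
  fixes q X c :: complex assumes "norm q < 1" "q \<noteq> 0" "X \<noteq> 0" "c \<noteq> 0"
  shows "theta q (q*X*c) * theta q (q*X/c) = (1/X^2) * (theta q (X*c) * theta q (X/c))"
proof -
  have h1: "theta q (q*X*c) = - (1/(X*c)) * theta q (X*c)"
    using theta_qshift[OF assms(1,2), of "X*c"] assms by (simp add: mult.assoc)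
  have h2: "theta q (q*X/c) = - (1/(X/c)) * theta q (X/c)"
    using theta_qshift[OF assms(1,2), of "X/c"] assms by (simp add: mult.assoc)
  have "theta q (q*X*c) * theta q (q*X/c) = (- (1/(X*c)) * theta q (X*c)) * (- (1/(X/c)) * theta q (X/c))"
    by (simp only: h1 h2)
  also have "\<dots> = (1/X^2) * (theta q (X*c) * theta q (X/c))"
    using assms by (simp add: power2_eq_square)
  finally show ?thesis .
qed

lemma pair_inv:
  fixes q X c :: complex assumes "norm q < 1" "q \<noteq> 0" "X \<noteq> 0" "c \<noteq> 0"
  shows "theta q ((1/X)*c) * theta q ((1/X)/c) = (1/X^2) * (theta q (X*c) * theta q (X/c))"
proof -
  have e1: "(1/X)*c = 1/(X/c)" "(1/X)/c = 1/(X*c)" using assms by auto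
  have h1: "theta q (1/(X/c)) = - (1/(X/c)) * theta q (X/c)"
    using theta_inv[OF assms(1,2), of "X/c"] assms by simp
  have h2: "theta q (1/(X*c)) = - (1/(X*c)) * theta q (X*c)"
    using theta_inv[OF assms(1,2), of "X*c"] assms by simp
  have "theta q ((1/X)*c) * theta q ((1/X)/c) = (- (1/(X/c)) * theta q (X/c)) * (- (1/(X*c)) * theta q (X*c))"
    by (simp only: e1 h1 h2)
  also have "\<dots> = (1/X^2) * (theta q (X*c) * theta q (X/c))"
    using assms by (simp add: power2_eq_square)
  finally show ?thesis .
qed

lemma theta_chain:
  fixes q :: complex
  assumes "norm q < 1" "(f has_field_derivative f') (at X)" "f X \<noteq> 0"
  shows "((\<lambda>x. theta q (f x)) has_field_derivative deriv (theta q) (f X) * f') (at X)"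
proof -
  have h: "(theta q has_field_derivative deriv (theta q) (f X)) (at (f X))"
    by (rule theta_deriv[OF assms(1,3)])
  show ?thesis by (rule DERIV_chain2[where f="theta q" and g=f, OF h assms(2)])
qed

locale m3t =
  fixes q Y U V :: complex
  assumes q1: "norm q < 1" and q0: "q \<noteq> 0" and Y0: "Y \<noteq> 0" and U0: "U \<noteq> 0" and V0: "V \<noteq> 0"
begin

abbreviation "I \<equiv> I3 q Y U V"
abbreviation "D \<equiv> D3 q Y"

lemma I_qshift: "X \<noteq> 0 \<Longrightarrow> I (q*X) = (1/X^2) * I X"
  unfolding I3_def
  using pair_qshift[OF q1 q0, of X Y] pair_qshift[OF q1 q0, of X U] pair_qshift[OF q1 q0, of X V] Y0 U0 V0
  by (simp add: algebra_simps)

lemma D_qshift: "X \<noteq> 0 \<Longrightarrow> D (q*X) = (1/X^2) * D X"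
  unfolding D3_def using pair_qshift[OF q1 q0, of X Y] Y0 by simp

lemma I_inv: "X \<noteq> 0 \<Longrightarrow> I (1/X) = (1/X^2) * I X"
  unfolding I3_def
  using pair_inv[OF q1 q0, of X Y] pair_inv[OF q1 q0, of X U] pair_inv[OF q1 q0, of X V] Y0 U0 V0
  by (simp add: algebra_simps)

lemma I_Y: "I Y = 0"
  unfolding I3_def using Y0 theta_one[OF q1] by (simp add: mult_ac)

lemma I_invY: "I (1/Y) = 0"
  using I_inv[of Y] I_Y Y0 by simp

lemma I_U: "I U = 0"
proof -
  have "theta q (Y/U) = - (Y/U) * theta q (U/Y)"
    using theta_inv[OF q1 q0, of "U/Y"] U0 Y0 by simp
  hence "I U = Y * theta q (U*Y) * theta q (U/Y) * theta q (U*V) * theta q (U/V)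
     - U * theta q (U*U) * theta q 1 * theta q (Y*V) * theta q (Y/V)
     + U * theta q (U*V) * theta q (U/V) * theta q (Y*U) * (- (Y/U) * theta q (U/Y))"
    unfolding I3_def using U0 by simp
  also have "\<dots> = 0" using U0 theta_one[OF q1] by (simp add: mult_ac)
  finally show ?thesis .
qed

lemma I_zero_shift: "X \<noteq> 0 \<Longrightarrow> I (q powi k * X) = 0 \<longleftrightarrow> I X = 0"
  by (rule qshift_pred[OF q0]) (use I_qshift in auto)

end


locale m3t_gen = m3t +
  assumes gY: "\<And>k. Y*Y \<noteq> q powi k" and gUY: "\<And>k. U*Y \<noteq> q powi k"
      and gUdY: "\<And>k. U/Y \<noteq> q powi k"
begin

lemma th_nz: "z \<noteq> 0 \<Longrightarrow> (\<And>k. z \<noteq> q powi k) \<Longrightarrow> theta q z \<noteq> 0"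
  using theta_zero[OF q1 q0] by blast

lemma D_U: "D U \<noteq> 0"
  unfolding D3_def using th_nz[of "U*Y"] th_nz[of "U/Y"] gUY gUdY U0 Y0 by auto

lemma S_open: "open (-{0::complex})" by auto

lemma S_conn: "connected (-{0::complex})"
  by (intro path_connected_imp_connected path_connected_punctured_universe) simp

lemma holI: "I holomorphic_on -{0}"
  unfolding I3_def using Y0 U0 V0
  by (intro holomorphic_intros theta_comp_holo[OF q1]) auto

lemma holD: "D holomorphic_on -{0}"
  unfolding D3_def using Y0
  by (intro holomorphic_intros theta_comp_holo[OF q1]) auto

lemma derivD:
  assumes "X \<noteq> 0"
  shows "(D has_field_derivative (Y * deriv (theta q) (X*Y) * theta q (X/Y)
            + theta q (X*Y) * ((1/Y) * deriv (theta q) (X/Y)))) (at X)"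
proof -
  have a: "((\<lambda>X. theta q (X*Y)) has_field_derivative deriv (theta q) (X*Y) * Y) (at X)"
    by (rule theta_chain[OF q1]) (use assms Y0 in \<open>auto intro!: derivative_eq_intros\<close>)
  have b: "((\<lambda>X. theta q (X/Y)) has_field_derivative deriv (theta q) (X/Y) * (1/Y)) (at X)"
    by (rule theta_chain[OF q1]) (use assms Y0 in \<open>auto intro!: derivative_eq_intros\<close>)
  have "((\<lambda>X. theta q (X*Y) * theta q (X/Y)) has_field_derivative
     deriv (theta q) (X*Y) * Y * theta q (X/Y) + deriv (theta q) (X/Y) * (1/Y) * theta q (X*Y)) (at X)"
    by (rule DERIV_mult[OF a b])
  thus ?thesis unfolding D3_def by (simp add: mult_ac)
qed

lemma zeroD:
  assumes X: "X \<noteq> 0" and DX: "D X = 0"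
  shows "I X = 0 \<and> deriv D X \<noteq> 0"
proof -
  have dD: "deriv D X = Y * deriv (theta q) (X*Y) * theta q (X/Y)
            + theta q (X*Y) * ((1/Y) * deriv (theta q) (X/Y))"
    using derivD[OF X] by (rule DERIV_imp_deriv)
  from DX have "theta q (X*Y) = 0 \<or> theta q (X/Y) = 0" unfolding D3_def by simp
  thus ?thesis
  proof
    assume h: "theta q (X*Y) = 0"
    then obtain k where k: "X*Y = q powi k" using theta_zero[OF q1 q0, of "X*Y"] X Y0 by auto
    have X': "X = q powi k * (1/Y)" using k Y0 by (simp add: field_simps)
    have "I X = 0" using I_zero_shift[of "1/Y" k] I_invY Y0 X' by simp
    moreover have "theta q (X/Y) \<noteq> 0"
    proof
      assume "theta q (X/Y) = 0"
      then obtain j where j: "X/Y = q powi j" using theta_zero[OF q1 q0, of "X/Y"] X Y0 by auto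
      have "Y*Y = (X*Y)/(X/Y)" using X Y0 by (simp add: field_simps)
      also have "\<dots> = q powi (k - j)" using k j q0 by (simp add: power_int_diff)
      finally show False using gY by blast
    qed
    moreover have "deriv (theta q) (X*Y) \<noteq> 0"
      using theta_simple_zero[OF q1 q0 _ h] X Y0 by simp
    ultimately show ?thesis using dD h Y0 by simp
  next
    assume h: "theta q (X/Y) = 0"
    then obtain k where k: "X/Y = q powi k" using theta_zero[OF q1 q0, of "X/Y"] X Y0 by auto
    have X': "X = q powi k * Y" using k Y0 by (simp add: field_simps)
    have "I X = 0" using I_zero_shift[of Y k] I_Y Y0 X' by simp
    moreover have "theta q (X*Y) \<noteq> 0"
    proof
      assume "theta q (X*Y) = 0"
      then obtain j where j: "X*Y = q powi j" using theta_zero[OF q1 q0, of "X*Y"] X Y0 by auto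
      have "Y*Y = (X*Y)/(X/Y)" using X Y0 by (simp add: field_simps)
      also have "\<dots> = q powi (j - k)" using k j q0 by (simp add: power_int_diff)
      finally show False using gY by blast
    qed
    moreover have "deriv (theta q) (X/Y) \<noteq> 0"
      using theta_simple_zero[OF q1 q0 _ h] X Y0 by simp
    ultimately show ?thesis using dD h Y0 by simp
  qed
qed


definition "gq X = (if D X = 0 then deriv I X / deriv D X else I X / D X)"

lemma isCont_D: "X \<noteq> 0 \<Longrightarrow> isCont D X"
  using holD holomorphic_on_imp_continuous_on continuous_on_eq_continuous_at[OF S_open] by auto

lemma derivI: "X \<noteq> 0 \<Longrightarrow> (I has_field_derivative deriv I X) (at X)"
proof -
  assume X: "X \<noteq> 0"
  have "I field_differentiable at X"
    by (rule holomorphic_on_imp_differentiable_at[OF holI S_open]) (use X in auto)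
  thus ?thesis using DERIV_deriv_iff_field_differentiable by blast
qed

lemma derivD': "X \<noteq> 0 \<Longrightarrow> (D has_field_derivative deriv D X) (at X)"
  by (metis derivD DERIV_imp_deriv)

lemma g_diff: assumes X0: "X0 \<noteq> 0" shows "gq field_differentiable at X0"
proof (cases "D X0 = 0")
  case False
  obtain e where e: "e > 0" "\<And>y. dist X0 y < e \<Longrightarrow> D y \<noteq> 0"
    using continuous_at_avoid[OF isCont_D[OF X0] False] by blast
  define B where "B = ball X0 (min e (norm X0))"
  have B: "open B" "X0 \<in> B" unfolding B_def using e X0 by auto
  have BD: "y \<in> B \<Longrightarrow> D y \<noteq> 0" for y unfolding B_def using e by auto
  have dq: "((\<lambda>x. I x / D x) has_field_derivative
      (deriv I X0 * D X0 - I X0 * deriv D X0) / (D X0 * D X0)) (at X0)"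
    by (rule DERIV_divide[OF derivI[OF X0] derivD'[OF X0] False])
  have "(gq has_field_derivative (deriv I X0 * D X0 - I X0 * deriv D X0) / (D X0 * D X0)) (at X0)"
    by (rule has_field_derivative_transform_within_open[OF dq B]) (use BD in \<open>auto simp: gq_def\<close>)
  thus ?thesis using field_differentiable_def by blast
next
  case True
  obtain r where r: "0 < r" "ball X0 r \<subseteq> -{0}" "\<And>z. z \<in> ball X0 r - {X0} \<Longrightarrow> D z \<noteq> 0"
    using isolated_zeros[OF holD S_open S_conn, of X0 U] X0 True D_U U0 by auto
  have hol1: "(\<lambda>x. I x / D x) holomorphic_on (ball X0 r - {X0})"
    by (intro holomorphic_on_divide holomorphic_on_subset[OF holI] holomorphic_on_subset[OF holD])
       (use r in auto)
  have hol2: "gq holomorphic_on (ball X0 r - {X0})"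
    by (rule holomorphic_transform[OF hol1]) (use r in \<open>auto simp: gq_def\<close>)
  have zD: "I X0 = 0" "deriv D X0 \<noteq> 0" using zeroD[OF X0 True] by auto
  have "((\<lambda>w. I w / D w) \<longlongrightarrow> gq X0) (at X0)"
    by (rule lhopital_complex_simple[OF derivI[OF X0] derivD'[OF X0]])
       (use zD True in \<open>auto simp: gq_def\<close>)
  moreover have "\<forall>\<^sub>F w in at X0. I w / D w = gq w"
  proof -
    have "\<forall>\<^sub>F w in at X0. w \<in> ball X0 r" by (rule eventually_at_in_open') (use r in auto)
    moreover have "\<forall>\<^sub>F w in at X0. w \<noteq> X0" by (simp add: eventually_at_filter)
    ultimately show ?thesis
      by eventually_elim (use r in \<open>auto simp: gq_def\<close>)
  qed
  ultimately have "(gq \<longlongrightarrow> gq X0) (at X0)" by (rule Lim_transform_eventually)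
  hence "(gq \<longlongrightarrow> gq X0) (at X0 within ball X0 r)" by (rule tendsto_within_subset) simp
  hence "gq holomorphic_on ball X0 r"
    by (intro no_isolated_singularity'[OF _ hol2]) auto
  thus ?thesis by (rule holomorphic_on_imp_differentiable_at) (use r in auto)
qed

lemma g_holo: "gq holomorphic_on -{0}"
  using g_diff by (auto simp: holomorphic_on_open[OF S_open] field_differentiable_def)


lemma g_qinv: assumes X: "X \<noteq> 0" shows "gq (q*X) = gq X"
proof -
  define h where "h X = gq (q*X) - gq X" for X
  have "(gq \<circ> (\<lambda>X. q*X)) holomorphic_on -{0}"
    by (rule holomorphic_on_compose) (auto intro!: holomorphic_intros holomorphic_on_subset[OF g_holo] simp: q0)
  hence holh: "h holomorphic_on -{0}" unfolding h_def
    by (intro holomorphic_intros g_holo) (simp add: o_def)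
  obtain e where e: "e > 0" "\<And>y. dist U y < e \<Longrightarrow> D y \<noteq> 0"
    using continuous_at_avoid[OF isCont_D[OF U0] D_U] by blast
  define W where "W = ball U (min e (norm U))"
  have W: "y \<in> W \<Longrightarrow> y \<noteq> 0 \<and> D y \<noteq> 0" for y
    unfolding W_def using e by (auto simp: dist_norm)
  have hW: "h y = 0" if "y \<in> W" for y
  proof -
    have y: "y \<noteq> 0" "D y \<noteq> 0" using W[OF that] by auto
    have "D (q*y) \<noteq> 0" using D_qshift[OF y(1)] y by simp
    hence "gq (q*y) = I (q*y) / D (q*y)" by (simp add: gq_def)
    also have "\<dots> = I y / D y" using I_qshift[OF y(1)] D_qshift[OF y(1)] y by simp
    also have "\<dots> = gq y" using y by (simp add: gq_def)
    finally show ?thesis by (simp add: h_def)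
  qed
  have "U islimpt W" unfolding W_def using e U0 by (simp add: islimpt_ball)
  hence "h X = 0"
    by (intro analytic_continuation[OF holh S_open S_conn, of W U X]) (use W hW U0 X in auto)
  thus ?thesis by (simp add: h_def)
qed

lemma g_qpow: "X \<noteq> 0 \<Longrightarrow> gq (q^n * X) = gq X"
proof (induction n)
  case (Suc n)
  have "gq (q^Suc n * X) = gq (q * (q^n * X))" by (simp add: mult_ac)
  also have "\<dots> = gq (q^n * X)" by (rule g_qinv) (use Suc q0 in auto)
  finally show ?case using Suc by simp
qed simp

lemma g_bounded: "bounded (gq ` (-{0}))"
proof -
  define A where "A = cball (0::complex) 1 - ball 0 (norm q)"
  have cA: "compact A" unfolding A_def by (intro compact_diff) auto
  have A0: "A \<subseteq> -{0}" unfolding A_def using q0 by auto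
  have "continuous_on A gq"
    by (rule holomorphic_on_imp_continuous_on[OF holomorphic_on_subset[OF g_holo A0]])
  hence bA: "bounded (gq ` A)" by (intro compact_imp_bounded compact_continuous_image cA)
  have "gq ` (-{0}) \<subseteq> gq ` A"
  proof
    fix y assume "y \<in> gq ` (-{0})"
    then obtain z where z: "z \<noteq> 0" "y = gq z" by auto
    have nq: "0 < norm q" "norm q < 1" using q0 q1 by auto
    obtain m where m: "norm q ^ m < norm z" using real_arch_pow_inv[of "norm z" "norm q"] z nq by auto
    define w where "w = z / q^m"
    have w0: "w \<noteq> 0" unfolding w_def using z q0 by simp
    have zw: "z = q^m * w" unfolding w_def using q0 by simp
    have nw: "norm w > 1" unfolding w_def using m nq by (simp add: norm_divide norm_power)
    obtain n0 where n0: "norm q ^ n0 < 1 / norm w" using real_arch_pow_inv[of "1/norm w" "norm q"] nw nq w0 by auto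
    define P where "P n = (norm q ^ n * norm w \<le> 1)" for n
    have Pn0: "P n0"
    proof -
      have "norm q ^ n0 * norm w < (1 / norm w) * norm w" using n0 nw by (intro mult_strict_right_mono) auto
      thus ?thesis unfolding P_def using nw w0 by simp
    qed
    define n where "n = (LEAST n. P n)"
    have Pn: "P n" unfolding n_def by (rule LeastI[of P n0, OF Pn0])
    have n0': "n \<noteq> 0" using Pn nw unfolding P_def by (cases n) auto
    have "\<not> P (n - 1)" unfolding n_def by (rule not_less_Least) (use n0' n_def in auto)
    hence "norm q ^ (n-1) * norm w > 1" unfolding P_def by simp
    hence "norm q * (norm q ^ (n-1) * norm w) \<ge> norm q" using nq by simp
    moreover have "norm q ^ n = norm q * norm q ^ (n-1)" using n0' by (cases n) auto
    ultimately have lo: "norm q ^ n * norm w \<ge> norm q" by (simp add: mult_ac)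
    have "q^n * w \<in> A" unfolding A_def using Pn lo unfolding P_def by (auto simp: norm_mult norm_power)
    moreover have "gq (q^n * w) = y" using g_qpow[OF w0, of n] g_qpow[OF w0, of m] z zw by simp
    ultimately show "y \<in> gq ` A" by force
  qed
  thus ?thesis using bA bounded_subset by blast
qed

lemma g_zero: assumes X: "X \<noteq> 0" shows "gq X = 0"
proof -
  define G where "G = gq \<circ> exp"
  have "G holomorphic_on UNIV" unfolding G_def
    by (rule holomorphic_on_compose) (auto intro!: holomorphic_intros holomorphic_on_subset[OF g_holo])
  moreover have "bounded (range G)"
    by (rule bounded_subset[OF g_bounded]) (auto simp: G_def)
  ultimately have "G constant_on UNIV" by (rule Liouville_theorem)
  then obtain c where c: "\<And>t. G t = c" unfolding constant_on_def by blast
  have "gq X = G (Ln X)" using X by (simp add: G_def)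
  also have "\<dots> = G (Ln U)" using c by simp
  also have "\<dots> = gq U" using U0 by (simp add: G_def)
  also have "\<dots> = 0" using D_U I_U by (simp add: gq_def)
  finally show ?thesis .
qed

lemma I_zero: assumes X: "X \<noteq> 0" shows "I X = 0"
proof (cases "D X = 0")
  case True thus ?thesis using zeroD[OF X] by blast
next
  case False thus ?thesis using g_zero[OF X] by (simp add: gq_def)
qed

end

lemma sq_eq_cases: fixes Y c :: complex assumes "Y*Y = c" shows "Y = csqrt c \<or> Y = - csqrt c"
proof -
  have "(Y - csqrt c) * (Y + csqrt c) = Y*Y - csqrt c ^ 2" by (simp add: algebra_simps power2_eq_square)
  also have "\<dots> = 0" using assms by (simp add: power2_csqrt)
  finally show ?thesis by (auto simp: add_eq_0_iff)
qed

lemma M3T: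
  fixes q X Y U V :: complex
  assumes q1: "norm q < 1" and q0: "q \<noteq> 0" and X: "X \<noteq> 0" and Y: "Y \<noteq> 0" and U: "U \<noteq> 0" and V: "V \<noteq> 0"
  shows "I3 q Y U V X = 0"
proof -
  define B where "B = {Y. \<exists>k. Y*Y = q powi k} \<union> {Y. \<exists>k. U*Y = q powi k} \<union> {Y. \<exists>k. U/Y = q powi k}"
  have cB: "countable B"
  proof -
    have "B \<subseteq> (\<Union>k. {csqrt (q powi k), - csqrt (q powi k)}) \<union> range (\<lambda>k. q powi k / U) \<union> range (\<lambda>k. U / q powi k)"
    proof
      fix y assume "y \<in> B"
      then consider k where "y*y = q powi k" | k where "U*y = q powi k" | k where "U/y = q powi k"
        unfolding B_def by blast
      thus "y \<in> (\<Union>k. {csqrt (q powi k), - csqrt (q powi k)}) \<union> range (\<lambda>k. q powi k / U) \<union> range (\<lambda>k. U / q powi k)"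
      proof cases
        case (1 k) thus ?thesis using sq_eq_cases[OF 1] by blast
      next
        case (2 k) hence "y = q powi k / U" using U by (simp add: field_simps)
        thus ?thesis by blast
      next
        case (3 k)
        have "y \<noteq> 0" using 3 q0 by (auto)
        hence "y = U / q powi k" using 3 q0 U by (simp add: field_simps)
        thus ?thesis by blast
      qed
    qed
    moreover have "countable ((\<Union>k::int. {csqrt (q powi k), - csqrt (q powi k)}) \<union> range (\<lambda>k. q powi k / U) \<union> range (\<lambda>k. U / q powi k))"
      by auto
    ultimately show ?thesis using countable_subset by blast
  qed
  define F where "F y = I3 q y U V X" for y
  have holF: "F holomorphic_on -{0}"
    unfolding F_def I3_def using X U V
    by (intro holomorphic_intros theta_comp_holo[OF q1]) auto
  have F0: "F y = 0" if "y \<in> -{0} - B" for y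
  proof -
    have y: "y \<noteq> 0" "y \<notin> B" using that by auto
    interpret m3t_gen q y U V
      by unfold_locales (use q1 q0 y U V in \<open>auto simp: B_def\<close>)
    show ?thesis unfolding F_def using I_zero[OF X] .
  qed
  have "Y islimpt (-{0} - B)"
  proof (rule islimpt_approachable[THEN iffD2], intro allI impI)
    fix e :: real assume e: "e > 0"
    define e' where "e' = min e (norm Y)"
    have e': "e' > 0" unfolding e'_def using e Y by auto
    have "\<not> ball Y e' \<subseteq> B \<union> {Y}"
      using uncountable_ball[OF e'] cB countable_subset[of "ball Y e'" "B \<union> {Y}"] by auto
    then obtain y where y: "y \<in> ball Y e'" "y \<notin> B \<union> {Y}" by blast
    hence y: "y \<in> ball Y e'" "y \<notin> B" "y \<noteq> Y" by auto
    have "y \<noteq> 0" using y(1) unfolding e'_def by (auto simp: dist_norm)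
    moreover have "dist y Y < e" using y(1) unfolding e'_def by (auto simp: dist_commute)
    ultimately show "\<exists>x'\<in>-{0} - B. x' \<noteq> Y \<and> dist x' Y < e" using y by auto
  qed
  moreover have conn: "connected (-{0::complex})"
    by (intro path_connected_imp_connected path_connected_punctured_universe) simp
  ultimately have "F Y = 0"
    by (intro analytic_continuation[OF holF _ conn _ _ _ F0]) (use Y in auto)
  thus ?thesis by (simp add: F_def)
qed


locale brkx =
  fixes x :: real and r :: nat
  assumes x0: "0 < x" and x1: "x < 1" and r0: "r > 0"
begin

definition "qq = complex_of_real (x ^ (2*r))"
definition "LL = complex_of_real (ln x)"
definition "ee u = exp (2 * u * LL)"

lemma qq1: "norm qq < 1"
proof -
  have "x ^ (2*r) < 1 ^ (2*r)" using x0 x1 r0 by (intro power_strict_mono) auto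
  moreover have "norm qq = x ^ (2*r)" unfolding qq_def using x0 by (simp only: norm_of_real abs_of_pos zero_less_power)
  ultimately show ?thesis by simp
qed

lemma qq0: "qq \<noteq> 0" unfolding qq_def using x0 by simp

lemma ee0: "ee u \<noteq> 0" unfolding ee_def by simp

lemma brk_alt: "brk x r u = exp ((u^2 / of_nat r - u) * LL) * theta qq (ee u)"
  unfolding brk_def qq_def LL_def ee_def by simp

lemma brk_pair: "brk x r (s+t) * brk x r (s-t) = exp (LL * (2*(s^2+t^2)/of_nat r - 2* s)) * (theta qq (ee s * ee t) * theta qq (ee s / ee t))"
proof -
  have rr: "(of_nat r :: complex) \<noteq> 0" using r0 by simp
  have e1: "ee (s+t) = ee s * ee t" unfolding ee_def by (simp add: exp_add[symmetric] algebra_simps)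
  have e2: "ee (s-t) = ee s / ee t" unfolding ee_def by (simp add: exp_diff[symmetric] algebra_simps)
  have e3: "exp (((s+t)^2 / of_nat r - (s+t)) * LL) * exp (((s-t)^2 / of_nat r - (s-t)) * LL)
      = exp (LL * (2*(s^2+t^2)/of_nat r - 2* s))"
  proof -
    have "((s+t)^2 / of_nat r - (s+t)) * LL + ((s-t)^2 / of_nat r - (s-t)) * LL
        = LL * (2*(s^2+t^2)/of_nat r - 2 * s)" using rr by (simp add: field_simps power2_eq_square)
    thus ?thesis by (simp only: exp_add[symmetric])
  qed
  show ?thesis unfolding brk_alt e1 e2 using e3 by (simp add: mult_ac)
qed

lemma brk_3T:
  "brk x r (a+b) * brk x r (a-b) * (brk x r (c+d) * brk x r (c-d))
   - brk x r (a+c) * brk x r (a-c) * (brk x r (b+d) * brk x r (b-d))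
   + brk x r (a+d) * brk x r (a-d) * (brk x r (b+c) * brk x r (b-c)) = 0"
proof -
  have rr: "(of_nat r :: complex) \<noteq> 0" using r0 by simp
  define M where "M = exp (LL * (2*(a^2+b^2+c^2+d^2)/of_nat r - 2*a - 2*b - 2*c))"
  have m1: "exp (LL * (2*(a^2+b^2)/of_nat r - 2*a)) * exp (LL * (2*(c^2+d^2)/of_nat r - 2*c)) = M * ee b"
  proof -
    have "LL * (2*(a^2+b^2)/of_nat r - 2*a) + LL * (2*(c^2+d^2)/of_nat r - 2*c)
       = LL * (2*(a^2+b^2+c^2+d^2)/of_nat r - 2*a - 2*b - 2*c) + 2 * b * LL"
      using rr by (simp add: field_simps power2_eq_square)
    thus ?thesis unfolding M_def ee_def by (simp only: exp_add[symmetric])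
  qed
  have m2: "exp (LL * (2*(a^2+c^2)/of_nat r - 2*a)) * exp (LL * (2*(b^2+d^2)/of_nat r - 2*b)) = M * ee c"
  proof -
    have "LL * (2*(a^2+c^2)/of_nat r - 2*a) + LL * (2*(b^2+d^2)/of_nat r - 2*b)
       = LL * (2*(a^2+b^2+c^2+d^2)/of_nat r - 2*a - 2*b - 2*c) + 2 * c * LL"
      using rr by (simp add: field_simps power2_eq_square)
    thus ?thesis unfolding M_def ee_def by (simp only: exp_add[symmetric])
  qed
  have m3: "exp (LL * (2*(a^2+d^2)/of_nat r - 2*a)) * exp (LL * (2*(b^2+c^2)/of_nat r - 2*b)) = M * ee c"
  proof -
    have "LL * (2*(a^2+d^2)/of_nat r - 2*a) + LL * (2*(b^2+c^2)/of_nat r - 2*b)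
       = LL * (2*(a^2+b^2+c^2+d^2)/of_nat r - 2*a - 2*b - 2*c) + 2 * c * LL"
      using rr by (simp add: field_simps power2_eq_square)
    thus ?thesis unfolding M_def ee_def by (simp only: exp_add[symmetric])
  qed
  have "I3 qq (ee b) (ee c) (ee d) (ee a) = 0"
    by (rule M3T[OF qq1 qq0 ee0 ee0 ee0 ee0])
  hence "M * I3 qq (ee b) (ee c) (ee d) (ee a) = 0" by simp
  moreover have "brk x r (a+b) * brk x r (a-b) * (brk x r (c+d) * brk x r (c-d))
   - brk x r (a+c) * brk x r (a-c) * (brk x r (b+d) * brk x r (b-d))
   + brk x r (a+d) * brk x r (a-d) * (brk x r (b+c) * brk x r (b-c)) = M * I3 qq (ee b) (ee c) (ee d) (ee a)"
  proof -
    have "brk x r (a+b) * brk x r (a-b) * (brk x r (c+d) * brk x r (c-d))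
      = (exp (LL * (2*(a^2+b^2)/of_nat r - 2*a)) * exp (LL * (2*(c^2+d^2)/of_nat r - 2*c)))
        * (theta qq (ee a * ee b) * theta qq (ee a / ee b) * (theta qq (ee c * ee d) * theta qq (ee c / ee d)))"
      unfolding brk_pair by (simp add: mult_ac)
    moreover have "brk x r (a+c) * brk x r (a-c) * (brk x r (b+d) * brk x r (b-d))
      = (exp (LL * (2*(a^2+c^2)/of_nat r - 2*a)) * exp (LL * (2*(b^2+d^2)/of_nat r - 2*b)))
        * (theta qq (ee a * ee c) * theta qq (ee a / ee c) * (theta qq (ee b * ee d) * theta qq (ee b / ee d)))"
      unfolding brk_pair by (simp add: mult_ac)
    moreover have "brk x r (a+d) * brk x r (a-d) * (brk x r (b+c) * brk x r (b-c))
      = (exp (LL * (2*(a^2+d^2)/of_nat r - 2*a)) * exp (LL * (2*(b^2+c^2)/of_nat r - 2*b)))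
        * (theta qq (ee a * ee d) * theta qq (ee a / ee d) * (theta qq (ee b * ee c) * theta qq (ee b / ee c)))"
      unfolding brk_pair by (simp add: mult_ac)
    ultimately show ?thesis unfolding m1 m2 m3 I3_def by (simp add: algebra_simps)
  qed
  ultimately show ?thesis by simp
qed

lemma brk_odd: "brk x r (-u) = - brk x r u"
proof -
  have rr: "(of_nat r :: complex) \<noteq> 0" using r0 by simp
  have "ee (-u) = 1 / ee u" unfolding ee_def by (simp add: exp_minus field_simps)
  hence t: "theta qq (ee (-u)) = - (1 / ee u) * theta qq (ee u)"
    using theta_inv[OF qq1 qq0 ee0] by simp
  have e: "exp (((-u)^2 / of_nat r - (-u)) * LL) = exp ((u^2 / of_nat r - u) * LL) * ee u"
    unfolding ee_def exp_add[symmetric] by (simp add: algebra_simps)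
  show ?thesis unfolding brk_alt t e using ee0[of u] by (simp add: field_simps)
qed

end

definition kkf :: "complex list \<Rightarrow> nat \<Rightarrow> complex" where
  "kkf ks j = (if j = 0 then -1 else if j \<le> length ks then ks ! (j - 1) else 0)"

lemma fchain_fst: "fst (fchain x r \<delta> i ks) = (\<lambda>j. if i \<le> j \<and> j \<le> i + length ks then 1 else 0)"
  by (simp add: fchain_def Let_def)

lemma fchain_snd: "snd (fchain x r \<delta> i ks) u \<kappa> =
   (\<Prod>j\<in>{1..length ks}. brk x r (u (i+j-1) 1 - u (i+j) 1 - (kkf ks j + 1/2) * \<delta>) / brk x r (u (i+j-1) 1 - u (i+j) 1))
 * (\<Prod>j\<in>{0..length ks}. brk x r (u (i+j) 1 - (kkf ks j - kkf ks (j+1) + 1/2) * \<delta> - \<kappa> (i+j)))"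
  by (simp add: fchain_def Let_def kkf_def)

lemma fchain_cong:
  assumes "\<And>t. t \<le> length ks \<Longrightarrow> u (i+t) 1 = u' (i+t) 1"
      and "\<And>t. t \<le> length ks \<Longrightarrow> \<kappa> (i+t) = \<kappa>' (i+t)"
  shows "snd (fchain x r \<delta> i ks) u \<kappa> = snd (fchain x r \<delta> i ks) u' \<kappa>'"
proof -
  have a: "u (i+j-1) 1 = u' (i+j-1) 1" "u (i+j) 1 = u' (i+j) 1" if "j \<in> {1..length ks}" for j
    using assms(1)[of "j-1"] assms(1)[of j] that by auto
  show ?thesis unfolding fchain_snd
    by (intro arg_cong2[where f="(*)"] prod.cong refl) (use a assms in auto)
qed

lemma kkf_app1: "j \<le> length ks1 \<Longrightarrow> kkf (ks1 @ k # ks2) j = kkf ks1 j"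
  by (auto simp: kkf_def nth_append)

lemma kkf_app2: "kkf (ks1 @ k # ks2) (Suc (length ks1)) = k"
  by (auto simp: kkf_def nth_append)

lemma kkf_app3: "1 \<le> t \<Longrightarrow> kkf (ks1 @ k # ks2) (Suc (length ks1) + t) = kkf ks2 t"
  by (auto simp: kkf_def nth_append)

lemma kkf_app3': "1 \<le> t \<Longrightarrow> kkf (ks1 @ k # ks2) (Suc (t + length ks1)) = kkf ks2 t"
  using kkf_app3[of t ks1 k ks2] by (simp add: add.commute)

lemma chain_split:
  fixes ks1 ks2 :: "complex list"
  defines "A \<equiv> length ks1"
  shows "snd (fchain x r \<delta> i (ks1 @ k # ks2)) u \<kappa> =
     snd (fchain x r \<delta> i ks1) u (\<kappa>(i+A := \<kappa> (i+A) - k * \<delta>))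
   * (brk x r (u (i+A) 1 - u (i+A+1) 1 - (k + 1/2) * \<delta>) / brk x r (u (i+A) 1 - u (i+A+1) 1))
   * snd (fchain x r \<delta> (i+A+1) ks2) u (\<kappa>(i+A+1 := \<kappa> (i+A+1) + (k+1) * \<delta>))"
proof -
  define m where "m = length ks2"
  define ks where "ks = ks1 @ k # ks2"
  have M: "length ks = A + 1 + m" unfolding ks_def A_def m_def by simp
  define lk where "lk ks' i' j = brk x r (u (i'+j-1) 1 - u (i'+j) 1 - (kkf ks' j + 1/2) * \<delta>) / brk x r (u (i'+j-1) 1 - u (i'+j) 1)" for ks' i' j
  define br where "br ks' i' \<kappa>' j = brk x r (u (i'+j) 1 - (kkf ks' j - kkf ks' (j+1) + 1/2) * \<delta> - \<kappa>' (i'+j))" for ks' i' \<kappa>' j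
  have ev: "snd (fchain x r \<delta> i' ks') u \<kappa>' = (\<Prod>j\<in>{1..length ks'}. lk ks' i' j) * (\<Prod>j\<in>{0..length ks'}. br ks' i' \<kappa>' j)" for i' ks' \<kappa>'
    unfolding fchain_snd lk_def br_def ..
  have s1: "{1..A+1+m} = {1..A} \<union> {A+1} \<union> (\<lambda>t. A+1+t) ` {1..m}"
    by (auto simp: image_iff) presburger+
  have s2: "{0..A+1+m} = {0..A} \<union> (\<lambda>t. A+1+t) ` {0..m}"
    by (auto simp: image_iff) presburger+
  have P1: "(\<Prod>j\<in>{1..A+1+m}. lk ks i j) = (\<Prod>j\<in>{1..A}. lk ks i j) * lk ks i (A+1) * (\<Prod>t\<in>{1..m}. lk ks i (A+1+t))"
  proof -
    have d1: "({1..A} \<union> {A+1}) \<inter> (\<lambda>t. A+1+t) ` {1..m} = {}" by auto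
    have d2: "{1..A} \<inter> {A+1} = {}" by auto
    have "(\<Prod>j\<in>{1..A+1+m}. lk ks i j) = (\<Prod>j\<in>({1..A} \<union> {A+1}) \<union> (\<lambda>t. A+1+t) ` {1..m}. lk ks i j)"
      by (simp only: s1)
    also have "\<dots> = (\<Prod>j\<in>{1..A} \<union> {A+1}. lk ks i j) * (\<Prod>j\<in>(\<lambda>t. A+1+t) ` {1..m}. lk ks i j)"
      by (rule prod.union_disjoint[OF _ _ d1]) auto
    also have "(\<Prod>j\<in>{1..A} \<union> {A+1}. lk ks i j) = (\<Prod>j\<in>{1..A}. lk ks i j) * (\<Prod>j\<in>{A+1}. lk ks i j)"
      by (rule prod.union_disjoint[OF _ _ d2]) auto
    also have "(\<Prod>j\<in>(\<lambda>t. A+1+t) ` {1..m}. lk ks i j) = (\<Prod>t\<in>{1..m}. lk ks i (A+1+t))"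
      by (rule prod.reindex_cong[where l="\<lambda>t. A+1+t"]) (auto simp: inj_on_def)
    finally show ?thesis by simp
  qed
  have P2: "(\<Prod>j\<in>{0..A+1+m}. br ks i \<kappa> j) = (\<Prod>j\<in>{0..A}. br ks i \<kappa> j) * (\<Prod>t\<in>{0..m}. br ks i \<kappa> (A+1+t))"
  proof -
    have d1: "{0..A} \<inter> (\<lambda>t. A+1+t) ` {0..m} = {}" by auto
    have "(\<Prod>j\<in>{0..A+1+m}. br ks i \<kappa> j) = (\<Prod>j\<in>{0..A} \<union> (\<lambda>t. A+1+t) ` {0..m}. br ks i \<kappa> j)"
      by (simp only: s2)
    also have "\<dots> = (\<Prod>j\<in>{0..A}. br ks i \<kappa> j) * (\<Prod>j\<in>(\<lambda>t. A+1+t) ` {0..m}. br ks i \<kappa> j)"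
      by (rule prod.union_disjoint[OF _ _ d1]) auto
    also have "(\<Prod>j\<in>(\<lambda>t. A+1+t) ` {0..m}. br ks i \<kappa> j) = (\<Prod>t\<in>{0..m}. br ks i \<kappa> (A+1+t))"
      by (rule prod.reindex_cong[where l="\<lambda>t. A+1+t"]) (auto simp: inj_on_def)
    finally show ?thesis by simp
  qed
  have L1: "(\<Prod>j\<in>{1..A}. lk ks i j) = (\<Prod>j\<in>{1..A}. lk ks1 i j)"
    by (rule prod.cong) (auto simp: lk_def ks_def kkf_app1 A_def)
  have L2: "lk ks i (A+1) = brk x r (u (i+A) 1 - u (i+A+1) 1 - (k + 1/2) * \<delta>) / brk x r (u (i+A) 1 - u (i+A+1) 1)"
    by (simp add: lk_def ks_def A_def kkf_app2)
  have L3: "(\<Prod>t\<in>{1..m}. lk ks i (A+1+t)) = (\<Prod>t\<in>{1..m}. lk ks2 (i+A+1) t)"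
    by (rule prod.cong) (auto simp: lk_def ks_def A_def kkf_app3' algebra_simps)
  have B1: "(\<Prod>j\<in>{0..A}. br ks i \<kappa> j) = (\<Prod>j\<in>{0..A}. br ks1 i (\<kappa>(i+A := \<kappa> (i+A) - k * \<delta>)) j)"
  proof (rule prod.cong[OF refl])
    fix j assume j: "j \<in> {0..A}"
    show "br ks i \<kappa> j = br ks1 i (\<kappa>(i+A := \<kappa> (i+A) - k * \<delta>)) j"
    proof (cases "j = A")
      case True
      have "kkf ks (j+1) = k" using kkf_app2[of ks1 k ks2] True unfolding ks_def A_def by simp
      moreover have "kkf ks1 (j+1) = 0" using True unfolding A_def by (simp add: kkf_def)
      moreover have "kkf ks j = kkf ks1 j" using True kkf_app1[of j ks1 k ks2] unfolding ks_def A_def by simp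
      ultimately show ?thesis unfolding br_def using True by (simp add: algebra_simps)
    next
      case False
      hence "kkf ks j = kkf ks1 j" "kkf ks (j+1) = kkf ks1 (j+1)"
        using j kkf_app1[of j ks1 k ks2] kkf_app1[of "j+1" ks1 k ks2] unfolding ks_def A_def by auto
      thus ?thesis unfolding br_def using False by simp
    qed
  qed
  have B2: "(\<Prod>t\<in>{0..m}. br ks i \<kappa> (A+1+t)) = (\<Prod>t\<in>{0..m}. br ks2 (i+A+1) (\<kappa>(i+A+1 := \<kappa> (i+A+1) + (k+1) * \<delta>)) t)"
  proof (rule prod.cong[OF refl])
    fix t assume t: "t \<in> {0..m}"
    have e1: "kkf ks (A+1+t+1) = kkf ks2 (t+1)" using kkf_app3[of "t+1" ks1 k ks2] unfolding ks_def A_def by simp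
    show "br ks i \<kappa> (A+1+t) = br ks2 (i+A+1) (\<kappa>(i+A+1 := \<kappa> (i+A+1) + (k+1) * \<delta>)) t"
    proof (cases "t = 0")
      case True
      have "kkf ks (A+1) = k" using kkf_app2[of ks1 k ks2] unfolding ks_def A_def by simp
      moreover have "kkf ks2 0 = -1" by (simp add: kkf_def)
      ultimately show ?thesis unfolding br_def using True e1 by (simp add: algebra_simps)
    next
      case False
      have "kkf ks (A+1+t) = kkf ks2 t" using kkf_app3[of t ks1 k ks2] False unfolding ks_def A_def by simp
      thus ?thesis unfolding br_def using False e1 by (simp add: algebra_simps)
    qed
  qed
  show ?thesis
    unfolding ks_def[symmetric] ev M P1 P2 L1 L2 L3 B1 B2 unfolding m_def A_def by (simp add: mult_ac)
qed

definition kshift :: "nat \<Rightarrow> (nat \<Rightarrow> nat) \<Rightarrow> complex \<Rightarrow> (nat \<Rightarrow> complex) \<Rightarrow> nat \<Rightarrow> complex" where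
  "kshift n b \<delta> \<kappa> = (let b' = (\<lambda>j. if 1 \<le> j \<and> j \<le> n - 1 then b j else 0)
     in (\<lambda>j. \<kappa> j + (of_nat (b' (j - 1)) - 2 * of_nat (b' j) + of_nat (b' (j + 1))) * \<delta>))"

lemma prod01:
  fixes a b :: "'a \<Rightarrow> nat"
  assumes "finite S" "\<And>j. j \<in> S \<Longrightarrow> a j \<le> 1 \<and> b j \<le> 1"
  shows "(\<Prod>j\<in>S. \<Prod>s\<in>{1..a j}. \<Prod>t\<in>{1..b j}. h j s t) = (\<Prod>j\<in>{j\<in>S. a j = 1 \<and> b j = 1}. h j 1 1)"
proof -
  have "(\<Prod>j\<in>S. \<Prod>s\<in>{1..a j}. \<Prod>t\<in>{1..b j}. h j s t) = (\<Prod>j\<in>S. if a j = 1 \<and> b j = 1 then h j 1 1 else 1)"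
  proof (rule prod.cong[OF refl])
    fix j assume "j \<in> S"
    hence "a j = 0 \<or> a j = 1" "b j = 0 \<or> b j = 1" using assms(2) by fastforce+
    thus "(\<Prod>s\<in>{1..a j}. \<Prod>t\<in>{1..b j}. h j s t) = (if a j = 1 \<and> b j = 1 then h j 1 1 else 1)"
      by auto
  qed
  also have "\<dots> = (\<Prod>j\<in>{j\<in>S. a j = 1 \<and> b j = 1}. h j 1 1)"
    by (rule prod.inter_filter[symmetric]) (use assms in auto)
  finally show ?thesis .
qed

lemma star_fst: "fst (star n x r \<delta> F G) = (\<lambda>j. fst F j + fst G j)"
  by (simp add: star_def Let_def)

lemma perms_one:
  assumes "\<forall>j\<in>{1..n-1}. c j \<le> 1"
  shows "perms_tuple n c = {\<lambda>j\<in>{1..n-1}. id}"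
proof -
  have "perms_tuple n c = PiE {1..n-1} (\<lambda>j. {(\<lambda>j\<in>{1..n-1}. id) j})"
    unfolding perms_tuple_def
  proof (rule PiE_cong)
    fix j assume j: "j \<in> {1..n-1}"
    hence "c j \<le> 1" using assms by auto
    hence "c j = 0 \<or> c j = 1" by arith
    thus "{p. p permutes {1..c j}} = {(\<lambda>j\<in>{1..n-1}. id) j}" using j
      by (auto simp: permutes_empty permutes_sing)
  qed
  also have "\<dots> = {\<lambda>j\<in>{1..n-1}. id}" by (rule PiE_singleton[OF restrict_extensional])
  finally show ?thesis .
qed

lemma star_one:
  assumes "\<forall>j\<in>{1..n-1}. fst F j + fst G j \<le> 1"
  shows "snd (star n x r \<delta> F G) w \<kappa> = star_integrand n x r \<delta> F G w \<kappa>"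
proof -
  have P: "perms_tuple n (\<lambda>j. fst F j + fst G j) = {\<lambda>j\<in>{1..n-1}. id}"
    by (rule perms_one) (use assms in auto)
  have "(\<lambda>j t. if 1 \<le> j \<and> j \<le> n - 1 then w j ((\<lambda>j\<in>{1..n-1}. id) j t) else w j t) = w"
    by (auto simp: fun_eq_iff)
  thus ?thesis unfolding star_def Let_def P by simp
qed

definition swapw :: "nat \<Rightarrow> (nat \<Rightarrow> nat \<Rightarrow> complex) \<Rightarrow> nat \<Rightarrow> nat \<Rightarrow> complex" where
  "swapw e w = (\<lambda>j t. if j = e then w j (Transposition.transpose 1 2 t) else w j t)"

lemma perms_two:
  assumes e: "e \<in> {1..n-1}" and ce: "c e = 2" and rest: "\<forall>j\<in>{1..n-1}-{e}. c j \<le> 1"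
  shows "perms_tuple n c = {\<lambda>j\<in>{1..n-1}. id, \<lambda>j\<in>{1..n-1}. if j = e then Transposition.transpose 1 2 else id}"
proof -
  have one: "{p. p permutes {1..c j}} = {id}" if "j \<in> {1..n-1}" "j \<noteq> e" for j
  proof -
    have "c j \<le> 1" using rest that by auto
    hence "c j = 0 \<or> c j = 1" by arith
    thus ?thesis by (auto simp: permutes_empty permutes_sing)
  qed
  have two: "{p. p permutes {1..c e}} = {id, Transposition.transpose 1 2}"
  proof -
    have "{1..c e} = {1, 2}" using ce by auto
    thus ?thesis by (auto simp: permutes_doubleton_iff)
  qed
  show ?thesis
  proof (intro equalityI subsetI)
    fix \<sigma> :: "nat \<Rightarrow> nat \<Rightarrow> nat" assume "\<sigma> \<in> perms_tuple n c"
    hence s: "\<And>j. j \<in> {1..n-1} \<Longrightarrow> \<sigma> j \<in> {p. p permutes {1..c j}}" "\<sigma> \<in> extensional {1..n-1}"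
      unfolding perms_tuple_def by (auto simp: PiE_iff)
    have sj: "\<sigma> j = id" if "j \<in> {1..n-1}" "j \<noteq> e" for j using s(1)[OF that(1)] one[OF that] by auto
    have "\<sigma> e = id \<or> \<sigma> e = Transposition.transpose 1 2" using s(1)[OF e] two by auto
    thus "\<sigma> \<in> {\<lambda>j\<in>{1..n-1}. id, \<lambda>j\<in>{1..n-1}. if j = e then Transposition.transpose 1 2 else id}"
    proof
      assume "\<sigma> e = id"
      hence "\<sigma> = (\<lambda>j\<in>{1..n-1}. id)" using sj s(2) by (auto simp: fun_eq_iff extensional_def)
      thus ?thesis by simp
    next
      assume "\<sigma> e = Transposition.transpose 1 2"
      hence "\<sigma> = (\<lambda>j\<in>{1..n-1}. if j = e then Transposition.transpose 1 2 else id)"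
        using sj s(2) by (auto simp: fun_eq_iff extensional_def)
      thus ?thesis by simp
    qed
  next
    fix \<sigma> :: "nat \<Rightarrow> nat \<Rightarrow> nat" assume "\<sigma> \<in> {\<lambda>j\<in>{1..n-1}. id, \<lambda>j\<in>{1..n-1}. if j = e then Transposition.transpose 1 2 else id}"
    thus "\<sigma> \<in> perms_tuple n c" unfolding perms_tuple_def using one two e
      by (auto simp: PiE_iff)
  qed
qed

lemma star_two:
  assumes e: "e \<in> {1..n-1}" and ce: "fst F e + fst G e = 2" and rest: "\<forall>j\<in>{1..n-1}-{e}. fst F j + fst G j \<le> 1"
  shows "snd (star n x r \<delta> F G) w \<kappa> = (star_integrand n x r \<delta> F G w \<kappa> + star_integrand n x r \<delta> F G (swapw e w) \<kappa>) / 2"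
proof -
  let ?s0 = "\<lambda>j\<in>{1..n-1}. id :: nat \<Rightarrow> nat"
  let ?s1 = "\<lambda>j\<in>{1..n-1}. if j = e then Transposition.transpose 1 2 else (id :: nat \<Rightarrow> nat)"
  have P: "perms_tuple n (\<lambda>j. fst F j + fst G j) = {?s0, ?s1}"
    by (rule perms_two[OF e]) (use ce rest in auto)
  have ne: "?s0 \<noteq> ?s1"
  proof
    assume "?s0 = ?s1"
    hence "?s0 e 1 = ?s1 e 1" by simp
    thus False using e by (simp add: Transposition.transpose_def)
  qed
  have w0: "(\<lambda>j t. if 1 \<le> j \<and> j \<le> n - 1 then w j (?s0 j t) else w j t) = w"
    by (auto simp: fun_eq_iff)
  have w1: "(\<lambda>j t. if 1 \<le> j \<and> j \<le> n - 1 then w j (?s1 j t) else w j t) = swapw e w"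
    using e by (auto simp: fun_eq_iff swapw_def)
  have S: "(\<Sum>\<sigma>\<in>{?s0,?s1}. H \<sigma>) = H ?s0 + H ?s1" for H :: "(nat \<Rightarrow> nat \<Rightarrow> nat) \<Rightarrow> complex"
    using ne by simp
  have C: "card {?s0, ?s1} = 2" using ne by simp
  show ?thesis unfolding star_def Let_def P snd_conv S C w0 w1 by simp
qed

lemma star_int01:
  assumes "\<And>j. fst F j \<le> 1" "\<And>j. fst G j \<le> 1"
  shows "star_integrand n x r \<delta> F G w \<kappa> =
     snd F w (kshift n (fst G) \<delta> \<kappa>) * snd G (\<lambda>j t. w j (fst F j + t)) \<kappa>
   * (\<Prod>j\<in>{j\<in>{1..n-1}. fst F j = 1 \<and> fst G j = 1}. brk x r (w j 1 - w j (fst F j + 1) - \<delta>) / brk x r (w j 1 - w j (fst F j + 1)))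
   * (\<Prod>j\<in>{j\<in>{1..n-2}. fst F j = 1 \<and> fst G (j+1) = 1}. brk x r (w j 1 - w (j+1) (fst F (j+1) + 1) + \<delta>/2) / brk x r (w j 1 - w (j+1) (fst F (j+1) + 1)))
   * (\<Prod>j\<in>{j\<in>{2..n-1}. fst F j = 1 \<and> fst G (j-1) = 1}. brk x r (w j 1 - w (j-1) (fst F (j-1) + 1) + \<delta>/2) / brk x r (w j 1 - w (j-1) (fst F (j-1) + 1)))"
proof -
  have p1: "(\<Prod>j\<in>{1..n-1}. \<Prod>s\<in>{1..fst F j}. \<Prod>t\<in>{1..fst G j}. brk x r (w j s - w j (fst F j + t) - \<delta>) / brk x r (w j s - w j (fst F j + t)))
     = (\<Prod>j\<in>{j\<in>{1..n-1}. fst F j = 1 \<and> fst G j = 1}. brk x r (w j 1 - w j (fst F j + 1) - \<delta>) / brk x r (w j 1 - w j (fst F j + 1)))"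
    by (rule prod01) (use assms in auto)
  have p2: "(\<Prod>j\<in>{1..n-2}. \<Prod>s\<in>{1..fst F j}. \<Prod>t\<in>{1..fst G (j+1)}. brk x r (w j s - w (j+1) (fst F (j+1) + t) + \<delta>/2) / brk x r (w j s - w (j+1) (fst F (j+1) + t)))
     = (\<Prod>j\<in>{j\<in>{1..n-2}. fst F j = 1 \<and> fst G (j+1) = 1}. brk x r (w j 1 - w (j+1) (fst F (j+1) + 1) + \<delta>/2) / brk x r (w j 1 - w (j+1) (fst F (j+1) + 1)))"
    by (rule prod01[where b="\<lambda>j. fst G (j+1)"]) (use assms in auto)
  have p3: "(\<Prod>j\<in>{2..n-1}. \<Prod>s\<in>{1..fst F j}. \<Prod>t\<in>{1..fst G (j-1)}. brk x r (w j s - w (j-1) (fst F (j-1) + t) + \<delta>/2) / brk x r (w j s - w (j-1) (fst F (j-1) + t)))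
     = (\<Prod>j\<in>{j\<in>{2..n-1}. fst F j = 1 \<and> fst G (j-1) = 1}. brk x r (w j 1 - w (j-1) (fst F (j-1) + 1) + \<delta>/2) / brk x r (w j 1 - w (j-1) (fst F (j-1) + 1)))"
    by (rule prod01[where b="\<lambda>j. fst G (j-1)"]) (use assms in auto)
  show ?thesis unfolding star_integrand_def Let_def p1 p2 p3 kshift_def by simp
qed

lemma fchain_le1: "fst (fchain x r \<delta> i ks) j \<le> 1"
  by (simp add: fchain_fst)

lemma case5:
  fixes ks ks' :: "complex list"
  assumes i: "1 \<le> i" and m: "length ks = m" and l: "length ks' = l" and ij: "i + m + 1 < j" and jl: "j + l \<le> n - 1"
  shows "teq n x r (star n x r \<delta> (fchain x r \<delta> i ks) (fchain x r \<delta> j ks'))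
                   (star n x r \<delta> (fchain x r \<delta> j ks') (fchain x r \<delta> i ks))"
proof -
  define F where "F = fchain x r \<delta> i ks"
  define G where "G = fchain x r \<delta> j ks'"
  have fF: "fst F = (\<lambda>j'. if i \<le> j' \<and> j' \<le> i + m then 1 else 0)" unfolding F_def fchain_fst m ..
  have fG: "fst G = (\<lambda>j'. if j \<le> j' \<and> j' \<le> j + l then 1 else 0)" unfolding G_def fchain_fst l ..
  have val: "snd (star n x r \<delta> F G) w \<kappa> = snd F w \<kappa> * snd G w \<kappa>"
    if FG: "F = fchain x r \<delta> i0 ks0" "G = fchain x r \<delta> j0 ks0'"
       and disj: "\<And>j'. fst F j' = 0 \<or> fst G j' = 0"
       and nadj1: "\<And>j'. fst F j' = 1 \<Longrightarrow> fst G (j'+1) = 0"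
       and nadj2: "\<And>j'. fst F j' = 1 \<Longrightarrow> fst G (j'-1) = 0"
    for F G w \<kappa> i0 j0 ks0 ks0'
  proof -
    have le1: "\<And>j. fst F j \<le> 1" "\<And>j. fst G j \<le> 1" using FG by (auto simp: fchain_fst)
    have "snd (star n x r \<delta> F G) w \<kappa> = star_integrand n x r \<delta> F G w \<kappa>"
    proof (rule star_one, intro ballI)
      fix j assume "j \<in> {1..n-1}"
      show "fst F j + fst G j \<le> 1" using disj[of j] le1(1)[of j] le1(2)[of j] by auto
    qed
    also have "\<dots> = snd F w (kshift n (fst G) \<delta> \<kappa>) * snd G (\<lambda>j t. w j (fst F j + t)) \<kappa>"
    proof -
      have e1: "{j\<in>{1..n-1}. fst F j = 1 \<and> fst G j = 1} = {}" proof -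
        have "False" if "fst F j = 1" "fst G j = 1" for j using disj[of j] that by simp
        thus ?thesis by blast
      qed
      have e2: "{j\<in>{1..n-2}. fst F j = 1 \<and> fst G (j+1) = 1} = {}" proof -
        have "False" if "fst F j = 1" "fst G (j+1) = 1" for j using nadj1[of j] that by simp
        thus ?thesis by blast
      qed
      have e3: "{j\<in>{2..n-1}. fst F j = 1 \<and> fst G (j-1) = 1} = {}" proof -
        have "False" if "fst F j = 1" "fst G (j-1) = 1" for j using nadj2[of j] that by simp
        thus ?thesis by blast
      qed
      show ?thesis unfolding star_int01[OF le1] e1 e2 e3 by simp
    qed
    also have "snd F w (kshift n (fst G) \<delta> \<kappa>) = snd F w \<kappa>"
      unfolding FG
    proof (rule fchain_cong)
      fix t assume t: "t \<le> length ks0"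
      have "fst F (i0 + t) = 1" using t FG by (simp add: fchain_fst)
      hence "fst G (i0+t) = 0" "fst G (i0+t+1) = 0" "fst G (i0+t-1) = 0"
        using disj[of "i0+t"] nadj1[of "i0+t"] nadj2[of "i0+t"] by auto
      thus "kshift n (fst (fchain x r \<delta> j0 ks0')) \<delta> \<kappa> (i0 + t) = \<kappa> (i0 + t)"
        unfolding kshift_def Let_def FG by (simp add: Suc_diff_1)
    qed simp
    also have "snd G (\<lambda>j t. w j (fst F j + t)) \<kappa> = snd G w \<kappa>"
      unfolding FG
    proof (rule fchain_cong)
      fix t assume t: "t \<le> length ks0'"
      have "fst G (j0 + t) = 1" using t FG by (simp add: fchain_fst)
      hence "fst F (j0+t) = 0" using disj[of "j0+t"] by auto
      thus "w (j0 + t) (fst (fchain x r \<delta> i0 ks0) (j0 + t) + 1) = w (j0 + t) 1" using FG by simp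
    qed simp
    finally show ?thesis .
  qed
  have v1: "snd (star n x r \<delta> F G) w \<kappa> = snd F w \<kappa> * snd G w \<kappa>" for w \<kappa>
    by (rule val[OF F_def G_def]) (use ij in \<open>auto simp: fF fG split: if_splits\<close>)
  have v2: "snd (star n x r \<delta> G F) w \<kappa> = snd G w \<kappa> * snd F w \<kappa>" for w \<kappa>
    by (rule val[OF G_def F_def]) (use ij in \<open>auto simp: fF fG split: if_splits\<close>)
  show ?thesis unfolding teq_def F_def[symmetric] G_def[symmetric] star_fst v1 v2
    by (auto simp: fun_eq_iff)
qed

lemma case1:
  fixes ks1 ks2 :: "complex list"
  assumes i: "1 \<le> i" and l: "1 \<le> l" and A: "length ks1 = l - 1" and m: "length ks2 = m" and n: "i + l + m \<le> n - 1"
  shows "teq n x r (star n x r \<delta> (fchain x r \<delta> i ks1) (fchain x r \<delta> (i + l) ks2))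
                   (fchain x r \<delta> i (ks1 @ [-1] @ ks2))"
proof -
  define a where "a = l - 1"
  have la: "l = a + 1" unfolding a_def using l by simp
  have Aa: "length ks1 = a" unfolding a_def using A by simp
  define F where "F = fchain x r \<delta> i ks1"
  define G where "G = fchain x r \<delta> (i + a + 1) ks2"
  have fF: "fst F = (\<lambda>j'. if i \<le> j' \<and> j' \<le> i + a then 1 else 0)" unfolding F_def fchain_fst A a_def ..
  have fG: "fst G = (\<lambda>j'. if i + a + 1 \<le> j' \<and> j' \<le> i + a + 1 + m then 1 else 0)" unfolding G_def fchain_fst m ..
  have le1: "\<And>j. fst F j \<le> 1" "\<And>j. fst G j \<le> 1" by (auto simp: fF fG)
  have val: "snd (star n x r \<delta> F G) w \<kappa> = snd (fchain x r \<delta> i (ks1 @ [-1] @ ks2)) w \<kappa>" for w \<kappa>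
  proof -
    have "snd (star n x r \<delta> F G) w \<kappa> = star_integrand n x r \<delta> F G w \<kappa>"
      by (rule star_one) (auto simp: fF fG)
    also have "\<dots> = snd F w (kshift n (fst G) \<delta> \<kappa>) * snd G (\<lambda>j t. w j (fst F j + t)) \<kappa>
       * (brk x r (w (i+a) 1 - w (i+a+1) 1 + \<delta>/2) / brk x r (w (i+a) 1 - w (i+a+1) 1))"
    proof -
      have e1: "{j\<in>{1..n-1}. fst F j = 1 \<and> fst G j = 1} = {}" by (auto simp: fF fG)
      have e2: "{j\<in>{1..n-2}. fst F j = 1 \<and> fst G (j+1) = 1} = {i+a}" using i n la by (auto simp: fF fG)
      have e3: "{j\<in>{2..n-1}. fst F j = 1 \<and> fst G (j-1) = 1} = {}" by (auto simp: fF fG)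
      have f1: "fst F (i+a+1) = 0" by (simp add: fF)
      show ?thesis unfolding star_int01[OF le1] e1 e2 e3 using f1 by (simp add: add.assoc)
    qed
    finally have X: "snd (star n x r \<delta> F G) w \<kappa> = snd F w (kshift n (fst G) \<delta> \<kappa>) * snd G (\<lambda>j t. w j (fst F j + t)) \<kappa>
       * (brk x r (w (i+a) 1 - w (i+a+1) 1 + \<delta>/2) / brk x r (w (i+a) 1 - w (i+a+1) 1))" .
    have A': "snd F w (kshift n (fst G) \<delta> \<kappa>) = snd (fchain x r \<delta> i ks1) w (\<kappa>(i+a := \<kappa> (i+a) - (-1) * \<delta>))"
      unfolding F_def
    proof (rule fchain_cong)
      fix t assume t: "t \<le> length ks1"
      hence ta: "t \<le> a" using A a_def by simp
      show "kshift n (fst G) \<delta> \<kappa> (i + t) = (\<kappa>(i+a := \<kappa> (i+a) - (-1) * \<delta>)) (i + t)"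
        using ta i n la unfolding kshift_def Let_def fG by auto
    qed simp
    have B': "snd G (\<lambda>j t. w j (fst F j + t)) \<kappa> = snd (fchain x r \<delta> (i+a+1) ks2) w (\<kappa>(i+a+1 := \<kappa> (i+a+1) + (-1+1) * \<delta>))"
      unfolding G_def by (rule fchain_cong) (auto simp: fF)
    have C': "w (i+a) 1 - w (i+a+1) 1 + \<delta>/2 = w (i+a) 1 - w (i+a+1) 1 - (-1 + 1/2) * \<delta>"
      by (simp add: algebra_simps)
    have T: "snd (fchain x r \<delta> i (ks1 @ [-1] @ ks2)) w \<kappa> =
        snd (fchain x r \<delta> i ks1) w (\<kappa>(i+a := \<kappa> (i+a) - (-1) * \<delta>))
      * (brk x r (w (i+a) 1 - w (i+a+1) 1 - (-1 + 1/2) * \<delta>) / brk x r (w (i+a) 1 - w (i+a+1) 1))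
      * snd (fchain x r \<delta> (i+a+1) ks2) w (\<kappa>(i+a+1 := \<kappa> (i+a+1) + (-1+1) * \<delta>))"
      using chain_split[of x r \<delta> i ks1 "-1" ks2 w \<kappa>] Aa by simp
    show ?thesis unfolding X A' B' C' T by (simp only: ac_simps)
  qed
  have fT: "fst (fchain x r \<delta> i (ks1 @ [-1] @ ks2)) = (\<lambda>j. fst F j + fst G j)"
    unfolding fchain_fst fF fG using Aa m by (auto simp: fun_eq_iff)
  show ?thesis unfolding teq_def star_fst fT using val
    unfolding F_def G_def la by (simp add: add.assoc)
qed


context brkx
begin

lemma case2:
  fixes ks1 ks2 :: "complex list"
  assumes i: "1 \<le> i" and l: "1 \<le> l" and A: "length ks1 = l - 1" and m: "length ks2 = m" and n: "i + l + m \<le> n - 1"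
  shows "teq n x r (star n x r \<delta> (fchain x r \<delta> (i + l) ks2) (fchain x r \<delta> i ks1))
                   (fchain x r \<delta> i (ks1 @ [0] @ ks2))"
proof -
  define a where "a = l - 1"
  have la: "l = a + 1" unfolding a_def using l by simp
  have Aa: "length ks1 = a" unfolding a_def using A by simp
  define F where "F = fchain x r \<delta> i ks1"
  define G where "G = fchain x r \<delta> (i + a + 1) ks2"
  have fF: "fst F = (\<lambda>j'. if i \<le> j' \<and> j' \<le> i + a then 1 else 0)" unfolding F_def fchain_fst Aa ..
  have fG: "fst G = (\<lambda>j'. if i + a + 1 \<le> j' \<and> j' \<le> i + a + 1 + m then 1 else 0)" unfolding G_def fchain_fst m ..
  have le1: "\<And>j. fst G j \<le> 1" "\<And>j. fst F j \<le> 1" by (auto simp: fF fG)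
  have val: "snd (star n x r \<delta> G F) w \<kappa> = snd (fchain x r \<delta> i (ks1 @ [0] @ ks2)) w \<kappa>" for w \<kappa>
  proof -
    have "snd (star n x r \<delta> G F) w \<kappa> = star_integrand n x r \<delta> G F w \<kappa>"
      by (rule star_one) (auto simp: fF fG)
    also have "\<dots> = snd G w (kshift n (fst F) \<delta> \<kappa>) * snd F (\<lambda>j t. w j (fst G j + t)) \<kappa>
       * (brk x r (w (i+a+1) 1 - w (i+a) 1 + \<delta>/2) / brk x r (w (i+a+1) 1 - w (i+a) 1))"
    proof -
      have e1: "{j\<in>{1..n-1}. fst G j = 1 \<and> fst F j = 1} = {}" by (auto simp: fF fG)
      have e2: "{j\<in>{1..n-2}. fst G j = 1 \<and> fst F (j+1) = 1} = {}" by (auto simp: fF fG)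
      have e3: "{j\<in>{2..n-1}. fst G j = 1 \<and> fst F (j-1) = 1} = {i+a+1}" using i n la by (auto simp: fF fG)
      have f1: "fst G (i+a) = 0" by (simp add: fG)
      show ?thesis unfolding star_int01[OF le1] e1 e2 e3 using f1 by simp
    qed
    finally have X: "snd (star n x r \<delta> G F) w \<kappa> = snd G w (kshift n (fst F) \<delta> \<kappa>) * snd F (\<lambda>j t. w j (fst G j + t)) \<kappa>
       * (brk x r (w (i+a+1) 1 - w (i+a) 1 + \<delta>/2) / brk x r (w (i+a+1) 1 - w (i+a) 1))" .
    have A': "snd F (\<lambda>j t. w j (fst G j + t)) \<kappa> = snd (fchain x r \<delta> i ks1) w (\<kappa>(i+a := \<kappa> (i+a) - 0 * \<delta>))"
      unfolding F_def by (rule fchain_cong) (auto simp: fG Aa)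
    have B': "snd G w (kshift n (fst F) \<delta> \<kappa>) = snd (fchain x r \<delta> (i+a+1) ks2) w (\<kappa>(i+a+1 := \<kappa> (i+a+1) + (0+1) * \<delta>))"
      unfolding G_def
    proof (rule fchain_cong)
      fix t assume t: "t \<le> length ks2"
      show "kshift n (fst F) \<delta> \<kappa> (i + a + 1 + t) = (\<kappa>(i+a+1 := \<kappa> (i+a+1) + (0+1) * \<delta>)) (i + a + 1 + t)"
        using t i n la m unfolding kshift_def Let_def fF by auto
    qed simp
    have C': "brk x r (w (i+a+1) 1 - w (i+a) 1 + \<delta>/2) / brk x r (w (i+a+1) 1 - w (i+a) 1)
      = brk x r (w (i+a) 1 - w (i+a+1) 1 - (0 + 1/2) * \<delta>) / brk x r (w (i+a) 1 - w (i+a+1) 1)"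
    proof -
      have "w (i+a+1) 1 - w (i+a) 1 + \<delta>/2 = - (w (i+a) 1 - w (i+a+1) 1 - (0 + 1/2) * \<delta>)"
           "w (i+a+1) 1 - w (i+a) 1 = - (w (i+a) 1 - w (i+a+1) 1)" by (simp_all add: algebra_simps)
      thus ?thesis by (simp only: brk_odd minus_divide_divide)
    qed
    have T: "snd (fchain x r \<delta> i (ks1 @ [0] @ ks2)) w \<kappa> =
        snd (fchain x r \<delta> i ks1) w (\<kappa>(i+a := \<kappa> (i+a) - 0 * \<delta>))
      * (brk x r (w (i+a) 1 - w (i+a+1) 1 - (0 + 1/2) * \<delta>) / brk x r (w (i+a) 1 - w (i+a+1) 1))
      * snd (fchain x r \<delta> (i+a+1) ks2) w (\<kappa>(i+a+1 := \<kappa> (i+a+1) + (0+1) * \<delta>))"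
      using chain_split[of x r \<delta> i ks1 0 ks2 w \<kappa>] Aa by simp
    show ?thesis unfolding X A' B' C' T by (simp only: ac_simps)
  qed
  have fT: "fst (fchain x r \<delta> i (ks1 @ [0] @ ks2)) = (\<lambda>j. fst G j + fst F j)"
    unfolding fchain_fst fF fG using Aa m by (auto simp: fun_eq_iff)
  show ?thesis unfolding teq_def star_fst fT using val
    unfolding F_def G_def la by (simp add: add.assoc)
qed

end

lemma alg3:
  fixes t1 t2 t3 t4 t5 t6 t7 t8 z1 z2 z3 P Q1 Q2 Pm Pp :: complex
  assumes "t1*t3*(t4*t2) - z1*z2*(Pp*z3) + t6*t7*(t5*t8) = 0"
  shows "t1*t2*(t3/Q2)*(Pm/P)*(t4/Q1) - t5*(t6/Q1)*t7*(Pm/P)*(t8/(-Q2)) = Pm*Pp*(z1*z2*z3)/(P*Q1*Q2)"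
proof -
  have h: "t1*t3*(t4*t2) + t6*t7*(t5*t8) = z1*z2*(Pp*z3)" using assms by (simp add: algebra_simps)
  have "t1*t2*(t3/Q2)*(Pm/P)*(t4/Q1) - t5*(t6/Q1)*t7*(Pm/P)*(t8/(-Q2))
      = Pm*inverse P*inverse Q1*inverse Q2*(t1*t3*(t4*t2) + t6*t7*(t5*t8))"
    by (simp add: divide_inverse inverse_minus_eq algebra_simps)
  also have "\<dots> = Pm*inverse P*inverse Q1*inverse Q2*(z1*z2*(Pp*z3))" by (simp only: h)
  also have "\<dots> = Pm*Pp*(z1*z2*z3)/(P*Q1*Q2)" by (simp add: divide_inverse inverse_mult_distrib mult_ac)
  finally show ?thesis .
qed

lemma alg4:
  fixes t1 t2 t4 t5 t7 t8 g3 g6 z1 z2 z3 P Q1 Q2 Pm Pp :: complex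
  assumes "t1*(-g3)*(t4*t2) - z1*z2*(Pp*z3) + (-g6)*t7*(t5*t8) = 0"
  shows "t1*(g3/Q2)*t2*(Pm/P)*(t4/Q1) - (g6/(-Q1))*t5*t7*(Pm/P)*(t8/Q2) = -(Pm*Pp*(z1*z2*z3))/(P*Q1*Q2)"
proof -
  have h: "t1*g3*(t4*t2) + g6*t7*(t5*t8) = -(z1*z2*(Pp*z3))" using assms by algebra
  have "t1*(g3/Q2)*t2*(Pm/P)*(t4/Q1) - (g6/(-Q1))*t5*t7*(Pm/P)*(t8/Q2)
      = Pm*inverse P*inverse Q1*inverse Q2*(t1*g3*(t4*t2) + g6*t7*(t5*t8))"
    by (simp add: divide_inverse inverse_minus_eq algebra_simps)
  also have "\<dots> = Pm*inverse P*inverse Q1*inverse Q2*(-(z1*z2*(Pp*z3)))" by (simp only: h)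
  also have "\<dots> = -(Pm*Pp*(z1*z2*z3))/(P*Q1*Q2)" by (simp add: divide_inverse inverse_mult_distrib mult_ac)
  finally show ?thesis .
qed

context brkx
begin

abbreviation "B \<equiv> brk x r"

lemma core3_half:
  fixes a b c K k d :: complex
  shows "B (a - (-1-0+1/2)*d - (K - d)) * B (b - (-1-0+1/2)*d - (K - k*d)) * (B (b - c - (k+1/2)*d) / B (b - c))
          * (B (a - b - d) / B (a - b)) * (B (a - c + d/2) / B (a - c))
       - B (a - (-1-0+1/2)*d - (K - 2*d - (k-1)*d)) * (B (a - c - (k-1+1/2)*d) / B (a - c)) * B (b - (-1-0+1/2)*d - K)
          * (B (a - b - d) / B (a - b)) * (B (c - b + d/2) / B (c - b))
       = B (a-b-d) * B (a-b+d) * (B (a+b-c-K+d) * B (-(k*d)) * B (c-K+(1+k)*d)) / (B (a-b) * B (a-c) * B (b-c))"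
proof -
  define X where "X = (a+b-c-K+d*(1-k))/2"
  define Y where "Y = (a-b+c-K+(2+k)*d)/2"
  define U where "U = (a+b-c-K+d*(1+k))/2"
  define V where "V = (a-b-c+K-k*d)/2"
  have E: "B (X+Y) * B (X-Y) * (B (U+V) * B (U-V)) - B (X+U) * B (X-U) * (B (Y+V) * B (Y-V))
      + B (X+V) * B (X-V) * (B (Y+U) * B (Y-U)) = 0" by (rule brk_3T)
  have a1: "X+Y = a - (-1-0+1/2)*d - (K - d)" "X-Y = b - c - (k+1/2)*d" "U+V = a - c + d/2"
     "U-V = b - (-1-0+1/2)*d - (K - k*d)" "X+U = a+b-c-K+d" "X-U = -(k*d)" "Y+V = a-b+d" "Y-V = c-K+(1+k)*d"
     "X+V = a - c - (k-1+1/2)*d" "X-V = b - (-1-0+1/2)*d - K" "Y+U = a - (-1-0+1/2)*d - (K - 2*d - (k-1)*d)"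
     "Y-U = c - b + d/2"
    unfolding X_def Y_def U_def V_def by (simp_all add: field_simps)
  have odd: "B (c - b) = - B (b - c)" using brk_odd[of "b - c"] by simp
  show ?thesis unfolding odd by (rule alg3[OF E[unfolded a1]])
qed


definition "L3 a b c K k d = B (a - (-1-0+1/2)*d - (K - d)) * B (b - (-1-0+1/2)*d - (K - k*d)) * (B (b - c - (k+1/2)*d) / B (b - c))
          * (B (a - b - d) / B (a - b)) * (B (a - c + d/2) / B (a - c))"
definition "R3 a b c K k d = B (a - (-1-0+1/2)*d - (K - 2*d - (k-1)*d)) * (B (a - c - (k-1+1/2)*d) / B (a - c)) * B (b - (-1-0+1/2)*d - K)
          * (B (a - b - d) / B (a - b)) * (B (c - b + d/2) / B (c - b))"

lemma core3: "L3 a b c K k d + L3 b a c K k d = R3 a b c K k d + R3 b a c K k d"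
proof -
  have h1: "L3 a b c K k d - R3 a b c K k d = B (a-b-d) * B (a-b+d) * (B (a+b-c-K+d) * B (-(k*d)) * B (c-K+(1+k)*d)) / (B (a-b) * B (a-c) * B (b-c))"
    unfolding L3_def R3_def by (rule core3_half)
  have h2: "L3 b a c K k d - R3 b a c K k d = B (b-a-d) * B (b-a+d) * (B (b+a-c-K+d) * B (-(k*d)) * B (c-K+(1+k)*d)) / (B (b-a) * B (b-c) * B (a-c))"
    unfolding L3_def R3_def by (rule core3_half)
  have o1: "B (b-a-d) = - B (a-b+d)" "B (b-a+d) = - B (a-b-d)" "B (b-a) = - B (a-b)" "b+a-c-K+d = a+b-c-K+d"
    using brk_odd[of "a-b+d"] brk_odd[of "a-b-d"] brk_odd[of "a-b"] by (simp_all add: algebra_simps)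
  have "L3 b a c K k d - R3 b a c K k d = - (L3 a b c K k d - R3 a b c K k d)"
    unfolding h1 h2 o1 by (simp add: mult_ac)
  thus ?thesis by (simp add: algebra_simps)
qed


definition "L4 a b c K k d = B (a - (-1-0+1/2)*d - (K - d)) * (B (c - b - (k-1+1/2)*d) / B (c - b)) * B (b - (-1-0+1/2)*d - (K + (k-1+1)*d))
          * (B (a - b - d) / B (a - b)) * (B (a - c + d/2) / B (a - c))"
definition "R4 a b c K k d = (B (c - a - (k+1/2)*d) / B (c - a)) * B (a - (-1-0+1/2)*d - (K - 2*d + (k+1)*d)) * B (b - (-1-0+1/2)*d - K)
          * (B (a - b - d) / B (a - b)) * (B (c - b + d/2) / B (c - b))"

lemma core4_half:
  "L4 a b c K k d - R4 a b c K k d = -(B (a-b-d) * B (a-b+d) * (B (a+b-c-K+d) * B (k*d) * B (c-K+(1-k)*d))) / (B (a-b) * B (a-c) * B (c-b))"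
proof -
  define X where "X = (a+b-c-K+(1+k)*d)/2"
  define Y where "Y = (a-b+c-K+(2-k)*d)/2"
  define U where "U = (a+b-c-K+(1-k)*d)/2"
  define V where "V = (a-b-c+K+k*d)/2"
  have E: "B (X+Y) * B (X-Y) * (B (U+V) * B (U-V)) - B (X+U) * B (X-U) * (B (Y+V) * B (Y-V))
      + B (X+V) * B (X-V) * (B (Y+U) * B (Y-U)) = 0" by (rule brk_3T)
  have a1: "X+Y = a - (-1-0+1/2)*d - (K - d)" "X-Y = -(c - b - (k-1+1/2)*d)" "U+V = a - c + d/2"
     "U-V = b - (-1-0+1/2)*d - (K + (k-1+1)*d)" "X+U = a+b-c-K+d" "X-U = k*d" "Y+V = a-b+d" "Y-V = c-K+(1-k)*d"
     "X+V = -(c - a - (k+1/2)*d)" "X-V = b - (-1-0+1/2)*d - K" "Y+U = a - (-1-0+1/2)*d - (K - 2*d + (k+1)*d)"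
     "Y-U = c - b + d/2"
    unfolding X_def Y_def U_def V_def by (simp_all add: field_simps)
  have odd: "B (c - a) = - B (a - c)" using brk_odd[of "a - c"] by simp
  show ?thesis unfolding L4_def R4_def odd by (rule alg4[OF E[unfolded a1 brk_odd]])
qed

lemma core4: "L4 a b c K k d + L4 b a c K k d = R4 a b c K k d + R4 b a c K k d"
proof -
  have h1: "L4 a b c K k d - R4 a b c K k d = -(B (a-b-d) * B (a-b+d) * (B (a+b-c-K+d) * B (k*d) * B (c-K+(1-k)*d))) / (B (a-b) * B (a-c) * B (c-b))"
    by (rule core4_half)
  have h2: "L4 b a c K k d - R4 b a c K k d = -(B (b-a-d) * B (b-a+d) * (B (b+a-c-K+d) * B (k*d) * B (c-K+(1-k)*d))) / (B (b-a) * B (b-c) * B (c-a))"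
    by (rule core4_half)
  have o1: "B (b-a-d) = - B (a-b+d)" "B (b-a+d) = - B (a-b-d)" "B (b-a) = - B (a-b)" "b+a-c-K+d = a+b-c-K+d"
     "B (b-c) = - B (c-b)" "B (c-a) = - B (a-c)"
    using brk_odd[of "a-b+d"] brk_odd[of "a-b-d"] brk_odd[of "a-b"] brk_odd[of "c-b"] brk_odd[of "a-c"] by (simp_all add: algebra_simps)
  have "L4 b a c K k d - R4 b a c K k d = - (L4 a b c K k d - R4 a b c K k d)"
    unfolding h1 h2 o1 by (simp add: mult_ac)
  thus ?thesis by (simp add: algebra_simps)
qed

end

context brkx
begin

lemma fchain_nil: "snd (fchain x r \<delta> i []) u \<kappa> = B (u i 1 - (-1-0+1/2)*\<delta> - \<kappa> i)"
  by (simp add: fchain_snd kkf_def)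

lemma case3:
  fixes ks :: "complex list"
  assumes i: "1 \<le> i" and m1: "1 \<le> m" and len: "length ks = m - 1" and n: "i + m \<le> n - 1"
  shows "teq n x r (star n x r \<delta> (fchain x r \<delta> i []) (fchain x r \<delta> i (k1 # ks)))
                   (star n x r \<delta> (fchain x r \<delta> i ((k1 - 1) # ks)) (fchain x r \<delta> i []))"
proof -
  define P where "P = fchain x r \<delta> i []"
  define C where "C = fchain x r \<delta> i (k1 # ks)"
  define C' where "C' = fchain x r \<delta> i ((k1 - 1) # ks)"
  have fP: "fst P = (\<lambda>j. if j = i then 1 else 0)" unfolding P_def fchain_fst by auto
  have fC: "fst C = (\<lambda>j. if i \<le> j \<and> j \<le> i + m then 1 else 0)" unfolding C_def fchain_fst using len m1 by auto
  have fC': "fst C' = (\<lambda>j. if i \<le> j \<and> j \<le> i + m then 1 else 0)" unfolding C'_def fchain_fst using len m1 by auto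
  have leP: "\<And>j. fst P j \<le> 1" and leC: "\<And>j. fst C j \<le> 1" and leC': "\<And>j. fst C' j \<le> 1"
    by (auto simp: fP fC fC')
  define R where "R w \<kappa> = snd (fchain x r \<delta> (i+1) ks) w (\<kappa>(i+1 := \<kappa> (i+1) + (k1+1) * \<delta>))" for w \<kappa>
  have intL: "star_integrand n x r \<delta> P C w \<kappa> = L3 (w i 1) (w i 2) (w (i+1) 1) (\<kappa> i) k1 \<delta> * R w \<kappa>" for w \<kappa>
  proof -
    have e1: "{j\<in>{1..n-1}. fst P j = 1 \<and> fst C j = 1} = {i}" using i n by (auto simp: fP fC)
    have e2: "{j\<in>{1..n-2}. fst P j = 1 \<and> fst C (j+1) = 1} = {i}" using i n m1 by (auto simp: fP fC)
    have e3: "{j\<in>{2..n-1}. fst P j = 1 \<and> fst C (j-1) = 1} = {}" by (auto simp: fP fC)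
    have k1: "kshift n (fst C) \<delta> \<kappa> i = \<kappa> i - \<delta>"
      unfolding kshift_def Let_def fC using i n m1 by (auto simp: algebra_simps)
    have sP: "snd P w (kshift n (fst C) \<delta> \<kappa>) = B (w i 1 - (-1-0+1/2)*\<delta> - (\<kappa> i - \<delta>))"
      unfolding P_def fchain_nil k1 ..
    have sC: "snd C (\<lambda>j t. w j (fst P j + t)) \<kappa> = B (w i 2 - (-1-0+1/2)*\<delta> - (\<kappa> i - k1*\<delta>))
        * (B (w i 2 - w (i+1) 1 - (k1+1/2)*\<delta>) / B (w i 2 - w (i+1) 1)) * R w \<kappa>"
    proof -
      have "snd C (\<lambda>j t. w j (fst P j + t)) \<kappa> =
         snd (fchain x r \<delta> i []) (\<lambda>j t. w j (fst P j + t)) (\<kappa>(i+0 := \<kappa> (i+0) - k1 * \<delta>))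
       * (B (w i (fst P i + 1) - w (i+0+1) (fst P (i+0+1) + 1) - (k1 + 1/2) * \<delta>) / B (w i (fst P i + 1) - w (i+0+1) (fst P (i+0+1) + 1)))
       * snd (fchain x r \<delta> (i+0+1) ks) (\<lambda>j t. w j (fst P j + t)) (\<kappa>(i+0+1 := \<kappa> (i+0+1) + (k1+1) * \<delta>))"
        unfolding C_def using chain_split[of x r \<delta> i "[]" k1 ks "\<lambda>j t. w j (fst P j + t)" \<kappa>] by simp
      also have "snd (fchain x r \<delta> (i+0+1) ks) (\<lambda>j t. w j (fst P j + t)) (\<kappa>(i+0+1 := \<kappa> (i+0+1) + (k1+1) * \<delta>)) = R w \<kappa>"
        unfolding R_def by (simp, rule fchain_cong) (auto simp: fP)
      finally show ?thesis by (simp add: fchain_nil fP numeral_2_eq_2)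
    qed
    show ?thesis unfolding star_int01[OF leP leC] e1 e2 e3 sP sC L3_def
      by (simp add: fP mult_ac numeral_2_eq_2)
  qed
  have intR: "star_integrand n x r \<delta> C' P w \<kappa> = R3 (w i 1) (w i 2) (w (i+1) 1) (\<kappa> i) k1 \<delta> * R w \<kappa>" for w \<kappa>
  proof -
    have e1: "{j\<in>{1..n-1}. fst C' j = 1 \<and> fst P j = 1} = {i}" using i n by (auto simp: fP fC')
    have e2: "{j\<in>{1..n-2}. fst C' j = 1 \<and> fst P (j+1) = 1} = {}" by (auto simp: fP fC')
    have e3: "{j\<in>{2..n-1}. fst C' j = 1 \<and> fst P (j-1) = 1} = {i+1}" using i n m1 by (auto simp: fP fC')
    define \<kappa>'' where "\<kappa>'' = kshift n (fst P) \<delta> \<kappa>"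
    have k1: "\<kappa>'' i = \<kappa> i - 2*\<delta>" "\<kappa>'' (i+1) = \<kappa> (i+1) + \<delta>" "\<And>t. t \<ge> 2 \<Longrightarrow> \<kappa>'' (i+t) = \<kappa> (i+t)"
      unfolding \<kappa>''_def kshift_def Let_def fP using i n m1 by (auto simp: algebra_simps)
    have sP: "snd P (\<lambda>j t. w j (fst C' j + t)) \<kappa> = B (w i 2 - (-1-0+1/2)*\<delta> - \<kappa> i)"
      unfolding P_def fchain_nil by (simp add: fC' numeral_2_eq_2)
    have sC: "snd C' w \<kappa>'' = B (w i 1 - (-1-0+1/2)*\<delta> - (\<kappa> i - 2*\<delta> - (k1-1)*\<delta>))
        * (B (w i 1 - w (i+1) 1 - (k1-1+1/2)*\<delta>) / B (w i 1 - w (i+1) 1)) * R w \<kappa>"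
    proof -
      have "snd C' w \<kappa>'' =
         snd (fchain x r \<delta> i []) w (\<kappa>''(i+0 := \<kappa>'' (i+0) - (k1-1) * \<delta>))
       * (B (w (i+0) 1 - w (i+0+1) 1 - (k1 - 1 + 1/2) * \<delta>) / B (w (i+0) 1 - w (i+0+1) 1))
       * snd (fchain x r \<delta> (i+0+1) ks) w (\<kappa>''(i+0+1 := \<kappa>'' (i+0+1) + (k1-1+1) * \<delta>))"
        unfolding C'_def using chain_split[of x r \<delta> i "[]" "k1-1" ks w \<kappa>''] by simp
      also have "snd (fchain x r \<delta> (i+0+1) ks) w (\<kappa>''(i+0+1 := \<kappa>'' (i+0+1) + (k1-1+1) * \<delta>)) = R w \<kappa>"
        unfolding R_def add_0_right
      proof (rule fchain_cong)
        fix t assume "t \<le> length ks"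
        show "(\<kappa>''(i+1 := \<kappa>'' (i+1) + (k1-1+1) * \<delta>)) (i+1+t) = (\<kappa>(i+1 := \<kappa> (i+1) + (k1+1) * \<delta>)) (i+1+t)"
          using k1(2) k1(3)[of "Suc t"] by (cases t) (auto simp: algebra_simps)
      qed simp
      finally show ?thesis by (simp add: fchain_nil k1(1))
    qed
    show ?thesis unfolding star_int01[OF leC' leP] e1 e2 e3 sP sC[unfolded \<kappa>''_def] R3_def
      by (simp add: fC' mult_ac numeral_2_eq_2)
  qed
  have ci: "i \<in> {1..n-1}" using i n m1 by auto
  have ceL: "fst P i + fst C i = 2" and restL: "\<forall>j\<in>{1..n-1}-{i}. fst P j + fst C j \<le> 1"
    by (auto simp: fP fC)
  have ceR: "fst C' i + fst P i = 2" and restR: "\<forall>j\<in>{1..n-1}-{i}. fst C' j + fst P j \<le> 1"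
    by (auto simp: fP fC')
  have vL: "snd (star n x r \<delta> P C) w \<kappa> = (L3 (w i 1) (w i 2) (w (i+1) 1) (\<kappa> i) k1 \<delta> + L3 (w i 2) (w i 1) (w (i+1) 1) (\<kappa> i) k1 \<delta>) * R w \<kappa> / 2" for w \<kappa>
  proof -
    have "R (swapw i w) \<kappa> = R w \<kappa>" unfolding R_def by (rule fchain_cong) (auto simp: swapw_def)
    moreover have "swapw i w i 1 = w i 2" "swapw i w i 2 = w i 1" "swapw i w (i+1) 1 = w (i+1) 1"
      by (auto simp: swapw_def Transposition.transpose_def)
    ultimately show ?thesis unfolding star_two[OF ci ceL restL] intL by (simp add: fP fC algebra_simps)
  qed
  have vR: "snd (star n x r \<delta> C' P) w \<kappa> = (R3 (w i 1) (w i 2) (w (i+1) 1) (\<kappa> i) k1 \<delta> + R3 (w i 2) (w i 1) (w (i+1) 1) (\<kappa> i) k1 \<delta>) * R w \<kappa> / 2" for w \<kappa>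
  proof -
    have "R (swapw i w) \<kappa> = R w \<kappa>" unfolding R_def by (rule fchain_cong) (auto simp: swapw_def)
    moreover have "swapw i w i 1 = w i 2" "swapw i w i 2 = w i 1" "swapw i w (i+1) 1 = w (i+1) 1"
      by (auto simp: swapw_def Transposition.transpose_def)
    ultimately show ?thesis unfolding star_two[OF ci ceR restR] intR by (simp add: fP fC' algebra_simps)
  qed
  show ?thesis unfolding teq_def P_def[symmetric] C_def[symmetric] C'_def[symmetric] star_fst vL vR core3
    by (auto simp: fP fC fC' fun_eq_iff)
qed


lemma case4:
  fixes ks :: "complex list"
  assumes i: "1 \<le> i" and m1: "1 \<le> m" and len: "length ks = m - 1" and n: "i + m \<le> n - 1"
  shows "teq n x r (star n x r \<delta> (fchain x r \<delta> (i + m) []) (fchain x r \<delta> i (ks @ [km - 1])))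
                   (star n x r \<delta> (fchain x r \<delta> i (ks @ [km])) (fchain x r \<delta> (i + m) []))"
proof -
  define A where "A = m - 1"
  have mA: "m = A + 1" unfolding A_def using m1 by simp
  have lA: "length ks = A" unfolding A_def using len by simp
  define e where "e = i + A + 1"
  have em: "i + m = e" unfolding e_def mA by simp
  define P where "P = fchain x r \<delta> e []"
  define C where "C = fchain x r \<delta> i (ks @ [km - 1])"
  define C' where "C' = fchain x r \<delta> i (ks @ [km])"
  have fP: "fst P = (\<lambda>j. if j = e then 1 else 0)" unfolding P_def fchain_fst by auto
  have fC: "fst C = (\<lambda>j. if i \<le> j \<and> j \<le> e then 1 else 0)" unfolding C_def fchain_fst e_def using lA by auto
  have fC': "fst C' = (\<lambda>j. if i \<le> j \<and> j \<le> e then 1 else 0)" unfolding C'_def fchain_fst e_def using lA by auto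
  have leP: "\<And>j. fst P j \<le> 1" and leC: "\<And>j. fst C j \<le> 1" and leC': "\<And>j. fst C' j \<le> 1"
    by (auto simp: fP fC fC')
  have en: "e \<le> n - 1" using n em by simp
  have ei: "e - 1 = i + A" "i + A + 1 = e" unfolding e_def by simp_all
  have ei2: "e - Suc 0 = i + A" "i + A \<noteq> e" "e \<noteq> i + A" unfolding e_def by simp_all
  define R where "R w \<kappa> = snd (fchain x r \<delta> i ks) w (\<kappa>(i+A := \<kappa> (i+A) - (km-1) * \<delta>))" for w \<kappa>
  have intL: "star_integrand n x r \<delta> P C w \<kappa> = L4 (w e 1) (w e 2) (w (i+A) 1) (\<kappa> e) km \<delta> * R w \<kappa>" for w \<kappa>
  proof -
    have e1: "{j\<in>{1..n-1}. fst P j = 1 \<and> fst C j = 1} = {e}" using i en by (auto simp: fP fC e_def)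
    have e2: "{j\<in>{1..n-2}. fst P j = 1 \<and> fst C (j+1) = 1} = {}" by (auto simp: fP fC)
    have e3: "{j\<in>{2..n-1}. fst P j = 1 \<and> fst C (j-1) = 1} = {e}" using i en by (auto simp: fP fC e_def)
    have k1: "kshift n (fst C) \<delta> \<kappa> e = \<kappa> e - \<delta>"
      unfolding kshift_def Let_def fC using i en by (auto simp: algebra_simps e_def)
    have sP: "snd P w (kshift n (fst C) \<delta> \<kappa>) = B (w e 1 - (-1-0+1/2)*\<delta> - (\<kappa> e - \<delta>))"
      unfolding P_def fchain_nil k1 ..
    have sC: "snd C (\<lambda>j t. w j (fst P j + t)) \<kappa> = R w \<kappa>
        * (B (w (i+A) 1 - w e 2 - (km-1+1/2)*\<delta>) / B (w (i+A) 1 - w e 2))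
        * B (w e 2 - (-1-0+1/2)*\<delta> - (\<kappa> e + (km-1+1)*\<delta>))"
    proof -
      have "snd C (\<lambda>j t. w j (fst P j + t)) \<kappa> =
         snd (fchain x r \<delta> i ks) (\<lambda>j t. w j (fst P j + t)) (\<kappa>(i+A := \<kappa> (i+A) - (km-1) * \<delta>))
       * (B ((\<lambda>j t. w j (fst P j + t)) (i+A) 1 - (\<lambda>j t. w j (fst P j + t)) (i+A+1) 1 - (km - 1 + 1/2) * \<delta>)
            / B ((\<lambda>j t. w j (fst P j + t)) (i+A) 1 - (\<lambda>j t. w j (fst P j + t)) (i+A+1) 1))
       * snd (fchain x r \<delta> (i+A+1) []) (\<lambda>j t. w j (fst P j + t)) (\<kappa>(i+A+1 := \<kappa> (i+A+1) + (km-1+1) * \<delta>))"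
        unfolding C_def using chain_split[of x r \<delta> i ks "km-1" "[]" "\<lambda>j t. w j (fst P j + t)" \<kappa>] lA by simp
      also have "snd (fchain x r \<delta> i ks) (\<lambda>j t. w j (fst P j + t)) (\<kappa>(i+A := \<kappa> (i+A) - (km-1) * \<delta>)) = R w \<kappa>"
        unfolding R_def by (rule fchain_cong) (auto simp: fP e_def lA)
      finally show ?thesis unfolding ei fchain_nil by (simp add: fP e_def numeral_2_eq_2)
    qed
    show ?thesis unfolding star_int01[OF leP leC] e1 e2 e3 sP sC L4_def ei
      by (simp add: fP mult_ac numeral_2_eq_2 ei2)
  qed
  have intR: "star_integrand n x r \<delta> C' P w \<kappa> = R4 (w e 1) (w e 2) (w (i+A) 1) (\<kappa> e) km \<delta> * R w \<kappa>" for w \<kappa>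
  proof -
    have e1: "{j\<in>{1..n-1}. fst C' j = 1 \<and> fst P j = 1} = {e}" using i en by (auto simp: fP fC' e_def)
    have e2: "{j\<in>{1..n-2}. fst C' j = 1 \<and> fst P (j+1) = 1} = {i+A}" using i en by (auto simp: fP fC' e_def)
    have e3: "{j\<in>{2..n-1}. fst C' j = 1 \<and> fst P (j-1) = 1} = {}" by (auto simp: fP fC')
    define \<kappa>'' where "\<kappa>'' = kshift n (fst P) \<delta> \<kappa>"
    have k1: "\<kappa>'' e = \<kappa> e - 2*\<delta>" "\<kappa>'' (i+A) = \<kappa> (i+A) + \<delta>" "\<And>t. t < A \<Longrightarrow> \<kappa>'' (i+t) = \<kappa> (i+t)"
      unfolding \<kappa>''_def kshift_def Let_def fP using i en by (auto simp: algebra_simps e_def)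
    have sP: "snd P (\<lambda>j t. w j (fst C' j + t)) \<kappa> = B (w e 2 - (-1-0+1/2)*\<delta> - \<kappa> e)"
      unfolding P_def fchain_nil using i by (simp add: fC' numeral_2_eq_2 e_def)
    have sC: "snd C' w \<kappa>'' = R w \<kappa>
        * (B (w (i+A) 1 - w e 1 - (km+1/2)*\<delta>) / B (w (i+A) 1 - w e 1))
        * B (w e 1 - (-1-0+1/2)*\<delta> - (\<kappa> e - 2*\<delta> + (km+1)*\<delta>))"
    proof -
      have "snd C' w \<kappa>'' =
         snd (fchain x r \<delta> i ks) w (\<kappa>''(i+A := \<kappa>'' (i+A) - km * \<delta>))
       * (B (w (i+A) 1 - w (i+A+1) 1 - (km + 1/2) * \<delta>) / B (w (i+A) 1 - w (i+A+1) 1))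
       * snd (fchain x r \<delta> (i+A+1) []) w (\<kappa>''(i+A+1 := \<kappa>'' (i+A+1) + (km+1) * \<delta>))"
        unfolding C'_def using chain_split[of x r \<delta> i ks km "[]" w \<kappa>''] lA by simp
      also have "snd (fchain x r \<delta> i ks) w (\<kappa>''(i+A := \<kappa>'' (i+A) - km * \<delta>)) = R w \<kappa>"
        unfolding R_def
      proof (rule fchain_cong)
        fix t assume t: "t \<le> length ks"
        show "(\<kappa>''(i+A := \<kappa>'' (i+A) - km * \<delta>)) (i+t) = (\<kappa>(i+A := \<kappa> (i+A) - (km-1) * \<delta>)) (i+t)"
        proof (cases "t = A")
          case True thus ?thesis using k1(2) by (simp add: algebra_simps)
        next
          case False hence "t < A" using t lA by simp
          thus ?thesis using k1(3)[of t] by simp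
        qed
      qed simp
      finally show ?thesis unfolding ei fchain_nil by (simp add: k1(1))
    qed
    show ?thesis unfolding star_int01[OF leC' leP] e1 e2 e3 sP sC[unfolded \<kappa>''_def] R4_def ei
      by (simp add: fC' mult_ac numeral_2_eq_2 e_def)
  qed
  have ci: "e \<in> {1..n-1}" using i en by (auto simp: e_def)
  have ceL: "fst P e + fst C e = 2" and restL: "\<forall>j\<in>{1..n-1}-{e}. fst P j + fst C j \<le> 1"
    by (auto simp: fP fC e_def)
  have ceR: "fst C' e + fst P e = 2" and restR: "\<forall>j\<in>{1..n-1}-{e}. fst C' j + fst P j \<le> 1"
    by (auto simp: fP fC' e_def)
  have sw: "R (swapw e w) \<kappa> = R w \<kappa>" "swapw e w e 1 = w e 2" "swapw e w e 2 = w e 1" "swapw e w (i+A) 1 = w (i+A) 1" for w \<kappa>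
    unfolding R_def by (rule fchain_cong) (auto simp: swapw_def e_def Transposition.transpose_def lA)
  have vL: "snd (star n x r \<delta> P C) w \<kappa> = (L4 (w e 1) (w e 2) (w (i+A) 1) (\<kappa> e) km \<delta> + L4 (w e 2) (w e 1) (w (i+A) 1) (\<kappa> e) km \<delta>) * R w \<kappa> / 2" for w \<kappa>
    unfolding star_two[OF ci ceL restL] intL sw by (simp add: algebra_simps)
  have vR: "snd (star n x r \<delta> C' P) w \<kappa> = (R4 (w e 1) (w e 2) (w (i+A) 1) (\<kappa> e) km \<delta> + R4 (w e 2) (w e 1) (w (i+A) 1) (\<kappa> e) km \<delta>) * R w \<kappa> / 2" for w \<kappa>
    unfolding star_two[OF ci ceR restR] intR sw by (simp add: algebra_simps)
  show ?thesis unfolding em teq_def P_def[symmetric] C_def[symmetric] C'_def[symmetric] star_fst vL vR core4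
    by (auto simp: fP fC fC' fun_eq_iff)
qed

end

theorem lemmaB4:
  fixes n r :: nat and x :: real and \<delta> :: complex
  assumes "n \<ge> 2" and "r > 0" and "0 < x" and "x < 1"
  shows
   "(\<forall>i l m (ks1::complex list) ks2. 1 \<le> i \<longrightarrow> 1 \<le> l \<longrightarrow> length ks1 = l - 1 \<longrightarrow> length ks2 = m
       \<longrightarrow> i + l + m \<le> n - 1 \<longrightarrow>
       teq n x r (star n x r \<delta> (fchain x r \<delta> i ks1) (fchain x r \<delta> (i + l) ks2))
                 (fchain x r \<delta> i (ks1 @ [-1] @ ks2)))
  \<and> (\<forall>i l m (ks1::complex list) ks2. 1 \<le> i \<longrightarrow> 1 \<le> l \<longrightarrow> length ks1 = l - 1 \<longrightarrow> length ks2 = m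
       \<longrightarrow> i + l + m \<le> n - 1 \<longrightarrow>
       teq n x r (star n x r \<delta> (fchain x r \<delta> (i + l) ks2) (fchain x r \<delta> i ks1))
                 (fchain x r \<delta> i (ks1 @ [0] @ ks2)))
  \<and> (\<forall>i m (k1::complex) ks. 1 \<le> i \<longrightarrow> 1 \<le> m \<longrightarrow> length ks = m - 1 \<longrightarrow> i + m \<le> n - 1 \<longrightarrow>
       teq n x r (star n x r \<delta> (fchain x r \<delta> i []) (fchain x r \<delta> i (k1 # ks)))
                 (star n x r \<delta> (fchain x r \<delta> i ((k1 - 1) # ks)) (fchain x r \<delta> i [])))
  \<and> (\<forall>i m ks (km::complex). 1 \<le> i \<longrightarrow> 1 \<le> m \<longrightarrow> length ks = m - 1 \<longrightarrow> i + m \<le> n - 1 \<longrightarrow>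
       teq n x r (star n x r \<delta> (fchain x r \<delta> (i + m) []) (fchain x r \<delta> i (ks @ [km - 1])))
                 (star n x r \<delta> (fchain x r \<delta> i (ks @ [km])) (fchain x r \<delta> (i + m) [])))
  \<and> (\<forall>i m j l (ks::complex list) ks'. 1 \<le> i \<longrightarrow> length ks = m \<longrightarrow> length ks' = l
       \<longrightarrow> i + m + 1 < j \<longrightarrow> j + l \<le> n - 1 \<longrightarrow>
       teq n x r (star n x r \<delta> (fchain x r \<delta> i ks) (fchain x r \<delta> j ks'))
                 (star n x r \<delta> (fchain x r \<delta> j ks') (fchain x r \<delta> i ks)))"
  proof -
  interpret brkx x r by unfold_locales (use assms in auto)
  show ?thesis
  proof (intro conjI allI impI)
    fix i l m :: nat and ks1 ks2 :: "complex list"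
    assume "1 \<le> i" "1 \<le> l" "length ks1 = l - 1" "length ks2 = m" "i + l + m \<le> n - 1"
    thus "teq n x r (star n x r \<delta> (fchain x r \<delta> i ks1) (fchain x r \<delta> (i + l) ks2))
                 (fchain x r \<delta> i (ks1 @ [-1] @ ks2))" by (rule case1)
  next
    fix i l m :: nat and ks1 ks2 :: "complex list"
    assume "1 \<le> i" "1 \<le> l" "length ks1 = l - 1" "length ks2 = m" "i + l + m \<le> n - 1"
    thus "teq n x r (star n x r \<delta> (fchain x r \<delta> (i + l) ks2) (fchain x r \<delta> i ks1))
                 (fchain x r \<delta> i (ks1 @ [0] @ ks2))" by (rule case2)
  next
    fix i m :: nat and k1 :: complex and ks :: "complex list"
    assume "1 \<le> i" "1 \<le> m" "length ks = m - 1" "i + m \<le> n - 1"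
    thus "teq n x r (star n x r \<delta> (fchain x r \<delta> i []) (fchain x r \<delta> i (k1 # ks)))
                 (star n x r \<delta> (fchain x r \<delta> i ((k1 - 1) # ks)) (fchain x r \<delta> i []))" by (rule case3)
  next
    fix i m :: nat and km :: complex and ks :: "complex list"
    assume "1 \<le> i" "1 \<le> m" "length ks = m - 1" "i + m \<le> n - 1"
    thus "teq n x r (star n x r \<delta> (fchain x r \<delta> (i + m) []) (fchain x r \<delta> i (ks @ [km - 1])))
                 (star n x r \<delta> (fchain x r \<delta> i (ks @ [km])) (fchain x r \<delta> (i + m) []))" by (rule case4)
  next
    fix i m j l :: nat and ks ks' :: "complex list"
    assume "1 \<le> i" "length ks = m" "length ks' = l" "i + m + 1 < j" "j + l \<le> n - 1"
    thus "teq n x r (star n x r \<delta> (fchain x r \<delta> i ks) (fchain x r \<delta> j ks'))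
                 (star n x r \<delta> (fchain x r \<delta> j ks') (fchain x r \<delta> i ks))" by (rule case5)
  qed
qed

end
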